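(* Let $d\geq 2$ and let $n_1\geq n_2\geq\cdots\geq n_d\geq 2$ be integers, and let $G=\textsc{Grid}(n_1,\ldots,n_d)$. Then $G$ admits a $Q_d$-magic vertex labeling $f$ and a $Q_d$-magic edge labeling $g$.
   Context: For integers $k\le \ell$, $[k]=\{1,\ldots,k\}$. The grid graph $\textsc{Grid}(n_1,\ldots,n_d)$ has vertex set $V=[n_1]\times\cdots\times[n_d]$ and edge set $E=\{\{\mathbf x,\mathbf y\}: \mathbf x,\mathbf y\in V,\ \sum_{i=1}^d|x_i-y_i|=1\}$ (the Cartesian product of $d$ paths with $n_1,\ldots,n_d$ vertices). The $d$-cube $Q_d$ is $\textsc{Grid}(2,\ldots,2)$ ($d$ entries). For graphs $G=(V,E)$ and $H$: a bijection $f:V\to\{1,\ldots,|V|\}$ is an $H$-magic vertex labeling if there is a constant $c$ with $\sum_{v\in V(H')}f(v)=c$ for every subgraph $H'\subseteq G$ isomorphic to $H$; a bijection $g:E\to\{1,\ldots,|E|\}$ is an $H$-magic edge labeling if there is a constant $c'$ with $\sum_{e\in E(H')}g(e)=c'$ for every subgraph $H'\subseteq G$ isomorphic to $H$. The constants $c$, $c'$ are called the $H$-magic sums. *)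

theory Defs
  imports Main
begin

definition grid_vertices :: "nat list \<Rightarrow> nat list set" where
  "grid_vertices ns = {xs. length xs = length ns \<and> (\<forall>i<length ns. 1 \<le> xs ! i \<and> xs ! i \<le> ns ! i)}"

definition grid_edges :: "nat list \<Rightarrow> nat list set set" where
  "grid_edges ns = {{xs, ys} | xs ys. xs \<in> grid_vertices ns \<and> ys \<in> grid_vertices ns \<and>
      (\<Sum>i<length ns. \<bar>int (xs ! i) - int (ys ! i)\<bar>) = 1}"

definition cube_vertices :: "nat \<Rightarrow> nat list set" where
  "cube_vertices d = grid_vertices (replicate d 2)"

definition cube_edges :: "nat \<Rightarrow> nat list set set" where
  "cube_edges d = grid_edges (replicate d 2)"

definition iso_subgraph ::
  "'a set \<Rightarrow> 'a set set \<Rightarrow> 'b set \<Rightarrow> 'b set set \<Rightarrow> 'a set \<Rightarrow> 'a set set \<Rightarrow> bool" where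
  "iso_subgraph V E VH EH V' E' \<longleftrightarrow>
     V' \<subseteq> V \<and> E' \<subseteq> E \<and> (\<forall>e\<in>E'. e \<subseteq> V') \<and>
     (\<exists>\<phi>. bij_betw \<phi> VH V' \<and>
        (\<forall>u\<in>VH. \<forall>v\<in>VH. {u, v} \<in> EH \<longleftrightarrow> {\<phi> u, \<phi> v} \<in> E'))"

definition magic_vertex_labeling ::
  "'a set \<Rightarrow> 'a set set \<Rightarrow> 'b set \<Rightarrow> 'b set set \<Rightarrow> ('a \<Rightarrow> nat) \<Rightarrow> bool" where
  "magic_vertex_labeling V E VH EH f \<longleftrightarrow>
     bij_betw f V {1..card V} \<and>
     (\<exists>c. \<forall>V' E'. iso_subgraph V E VH EH V' E' \<longrightarrow> (\<Sum>v\<in>V'. f v) = c)"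

definition magic_edge_labeling ::
  "'a set \<Rightarrow> 'a set set \<Rightarrow> 'b set \<Rightarrow> 'b set set \<Rightarrow> ('a set \<Rightarrow> nat) \<Rightarrow> bool" where
  "magic_edge_labeling V E VH EH g \<longleftrightarrow>
     bij_betw g E {1..card E} \<and>
     (\<exists>c. \<forall>V' E'. iso_subgraph V E VH EH V' E' \<longrightarrow> (\<Sum>e\<in>E'. g e) = c)"

end

theory Submission
  imports Defs
begin

lemma gv_Nil[simp]: "grid_vertices [] = {[]}"
  by (auto simp: grid_vertices_def)

lemma gv_Cons_mem[simp]: "(x#xs) \<in> grid_vertices (n#ns) \<longleftrightarrow> 1 \<le> x \<and> x \<le> n \<and> xs \<in> grid_vertices ns"
  apply (simp add: grid_vertices_def)
  apply (auto simp: nth_Cons split: nat.splits)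
  done

lemma gv_Nil_mem[simp]: "[] \<in> grid_vertices (n#ns) \<longleftrightarrow> False"
  by (simp add: grid_vertices_def)

lemma gv_Cons: "grid_vertices (n#ns) = (\<lambda>(a,xs). a#xs) ` ({1..n} \<times> grid_vertices ns)"
proof (rule set_eqI)
  fix ys show "ys \<in> grid_vertices (n#ns) \<longleftrightarrow> ys \<in> (\<lambda>(a,xs). a#xs) ` ({1..n} \<times> grid_vertices ns)"
    by (cases ys) auto
qed

lemma gv_finite_card: "finite (grid_vertices ns) \<and> card (grid_vertices ns) = prod_list ns"
proof (induction ns)
  case Nil then show ?case by simp
next
  case (Cons n ns)
  have inj: "inj_on (\<lambda>(a,xs). a#xs) ({1..n} \<times> grid_vertices ns)"
    by (auto simp: inj_on_def)
  show ?case using Cons by (subst gv_Cons, subst card_image[OF inj]) (simp add: gv_Cons card_cartesian_product)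
qed

lemma gv_finite[simp]: "finite (grid_vertices ns)" using gv_finite_card by blast
lemma gv_card: "card (grid_vertices ns) = prod_list ns" using gv_finite_card by blast

lemma gv_length: "x \<in> grid_vertices ns \<Longrightarrow> length x = length ns"
  by (simp add: grid_vertices_def)
lemma gv_bounds: "x \<in> grid_vertices ns \<Longrightarrow> i < length ns \<Longrightarrow> 1 \<le> x!i \<and> x!i \<le> ns!i"
  by (simp add: grid_vertices_def)

definition adj :: "nat list \<Rightarrow> nat list \<Rightarrow> nat \<Rightarrow> bool" where
  "adj x y j \<longleftrightarrow> length y = length x \<and> j < length x \<and> (\<forall>i<length x. i \<noteq> j \<longrightarrow> y!i = x!i)
     \<and> (y!j = Suc (x!j) \<or> x!j = Suc (y!j))"

lemma adj_sym: "adj x y j \<Longrightarrow> adj y x j"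
  by (auto simp: adj_def)

lemma adj_uniq: "adj x y j \<Longrightarrow> adj x y k \<Longrightarrow> j = k"
  unfolding adj_def by (metis Suc_n_not_n n_not_Suc_n)

lemma adj_neq: "adj x y j \<Longrightarrow> x \<noteq> y"
  unfolding adj_def by auto

lemma sum_abs_one:
  fixes a :: "nat \<Rightarrow> int"
  assumes "finite I" "(\<Sum>i\<in>I. \<bar>a i\<bar>) = 1"
  shows "\<exists>j\<in>I. \<bar>a j\<bar> = 1 \<and> (\<forall>i\<in>I. i \<noteq> j \<longrightarrow> a i = 0)"
proof -
  obtain j where j: "j \<in> I" "a j \<noteq> 0"
  proof (rule ccontr)
    assume "\<not> thesis"
    with that have "\<forall>i\<in>I. a i = 0" by blast
    then have "(\<Sum>i\<in>I. \<bar>a i\<bar>) = 0" by simp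
    with assms show False by simp
  qed
  have split: "(\<Sum>i\<in>I. \<bar>a i\<bar>) = \<bar>a j\<bar> + (\<Sum>i\<in>I-{j}. \<bar>a i\<bar>)"
    using assms(1) j(1) by (simp add: sum.remove)
  have nn: "(\<Sum>i\<in>I-{j}. \<bar>a i\<bar>) \<ge> 0" by (simp add: sum_nonneg)
  have "\<bar>a j\<bar> \<ge> 1" using j(2) by linarith
  then have aj: "\<bar>a j\<bar> = 1" and rest: "(\<Sum>i\<in>I-{j}. \<bar>a i\<bar>) = 0" using split assms(2) nn by linarith+
  have "\<forall>i\<in>I-{j}. \<bar>a i\<bar> = 0"
    using rest sum_nonneg_eq_0_iff[of "I-{j}" "\<lambda>i. \<bar>a i\<bar>"] assms(1) by auto
  then show ?thesis using aj j(1) by auto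
qed

lemma dist_one_adj:
  assumes "length x = length y" "(\<Sum>i<length x. \<bar>int (x!i) - int (y!i)\<bar>) = 1"
  shows "\<exists>j. adj x y j"
proof -
  obtain j where j: "j < length x" "\<bar>int (x!j) - int (y!j)\<bar> = 1"
    "\<forall>i<length x. i \<noteq> j \<longrightarrow> int (x!i) - int (y!i) = 0"
    using sum_abs_one[of "{..<length x}" "\<lambda>i. int (x!i) - int (y!i)"] assms(2) by auto
  have "adj x y j" unfolding adj_def using j assms(1) by auto
  then show ?thesis by blast
qed

lemma adj_dist_one:
  assumes "adj x y j"
  shows "(\<Sum>i<length x. \<bar>int (x!i) - int (y!i)\<bar>) = 1"
proof -
  have j: "j < length x" using assms by (simp add: adj_def)
  have "(\<Sum>i<length x. \<bar>int (x!i) - int (y!i)\<bar>) = \<bar>int (x!j) - int (y!j)\<bar>"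
    using j assms by (subst sum.remove[of _ j]) (auto simp: adj_def intro!: sum.neutral)
  also have "\<dots> = 1" using assms by (auto simp: adj_def)
  finally show ?thesis .
qed

lemma grid_edge_iff:
  assumes "x \<in> grid_vertices ns" "y \<in> grid_vertices ns"
  shows "{x,y} \<in> grid_edges ns \<longleftrightarrow> (\<exists>j. adj x y j)"
proof
  assume "{x,y} \<in> grid_edges ns"
  then obtain xs ys where e: "{x,y} = {xs,ys}" "xs \<in> grid_vertices ns" "ys \<in> grid_vertices ns"
    "(\<Sum>i<length ns. \<bar>int (xs ! i) - int (ys ! i)\<bar>) = 1"
    by (auto simp: grid_edges_def)
  have lx: "length x = length ns" "length y = length ns" using assms gv_length by auto
  from e(1) have "(x = xs \<and> y = ys) \<or> (x = ys \<and> y = xs)" by (auto simp: doubleton_eq_iff)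
  then have "(\<Sum>i<length ns. \<bar>int (x ! i) - int (y ! i)\<bar>) = 1"
  proof
    assume "x = ys \<and> y = xs"
    then show ?thesis using e(4) by (simp add: abs_minus_commute)
  qed (use e(4) in simp)
  then show "\<exists>j. adj x y j" using dist_one_adj lx by auto
next
  assume "\<exists>j. adj x y j"
  then obtain j where "adj x y j" by blast
  then have "(\<Sum>i<length ns. \<bar>int (x ! i) - int (y ! i)\<bar>) = 1"
    using adj_dist_one gv_length[OF assms(1)] by metis
  then show "{x,y} \<in> grid_edges ns" using assms unfolding grid_edges_def by blast
qed

lemma grid_edge_elem:
  assumes "e \<in> grid_edges ns"
  obtains x y where "e = {x,y}" "x \<in> grid_vertices ns" "y \<in> grid_vertices ns"
proof -
  from assms obtain x y where "e = {x,y}" "x \<in> grid_vertices ns" "y \<in> grid_vertices ns"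
    by (auto simp: grid_edges_def)
  then show ?thesis using that by blast
qed

definition flip :: "nat \<Rightarrow> nat list \<Rightarrow> nat list" where
  "flip i u = u[i := 3 - u!i]"

lemma one_two: "(Suc 0 \<le> a \<and> a \<le> (2::nat)) \<longleftrightarrow> (a = 1 \<or> a = 2)" by arith

lemma cv_mem: "u \<in> cube_vertices d \<longleftrightarrow> length u = d \<and> (\<forall>i<d. u!i = 1 \<or> u!i = 2)"
  unfolding cube_vertices_def grid_vertices_def by (simp add: one_two)

lemma fl_mem: "u \<in> cube_vertices d \<Longrightarrow> i < d \<Longrightarrow> flip i u \<in> cube_vertices d"
  by (auto simp: cv_mem flip_def nth_list_update)

lemma fl_fl: "u \<in> cube_vertices d \<Longrightarrow> i < d \<Longrightarrow> flip i (flip i u) = u"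
proof -
  assume a: "u \<in> cube_vertices d" "i < d"
  then have "u!i = 1 \<or> u!i = 2" "i < length u" by (auto simp: cv_mem)
  then show ?thesis by (auto simp: flip_def) (metis list_update_id)+
qed

lemma fl_comm: "i \<noteq> k \<Longrightarrow> flip i (flip k u) = flip k (flip i u)"
  by (simp add: flip_def list_update_swap)

lemma fl_nth: "u \<in> cube_vertices d \<Longrightarrow> i < d \<Longrightarrow> flip i u ! i \<noteq> u ! i"
  by (auto simp: cv_mem flip_def)

lemma fl_nth_other: "j \<noteq> i \<Longrightarrow> flip i u ! j = u ! j"
  by (simp add: flip_def)

lemma fl_neq: "u \<in> cube_vertices d \<Longrightarrow> i < d \<Longrightarrow> flip i u \<noteq> u"
  using fl_nth by fastforce

lemma fl_inj: "u \<in> cube_vertices d \<Longrightarrow> i < d \<Longrightarrow> flip i u = flip k u \<Longrightarrow> i = k"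
proof (rule ccontr)
  assume a: "u \<in> cube_vertices d" "i < d" "flip i u = flip k u" "i \<noteq> k"
  then have "flip k u ! i = u ! i" using fl_nth_other[of i k u] by simp
  then show False using a fl_nth[OF a(1,2)] by simp
qed

lemma fl_ne2: "u \<in> cube_vertices d \<Longrightarrow> i < d \<Longrightarrow> k < d \<Longrightarrow> i \<noteq> k \<Longrightarrow> flip i (flip k u) \<noteq> u"
proof
  assume a: "u \<in> cube_vertices d" "i < d" "k < d" "i \<noteq> k" "flip i (flip k u) = u"
  have "flip k u ! i = u ! i" using fl_nth_other[of i k u] a by simp
  moreover have "flip i (flip k u) ! i \<noteq> flip k u ! i" using fl_nth[of "flip k u" d i] a fl_mem by blast
  ultimately show False using a by simp
qed

lemma cube_adj:
  assumes "u \<in> cube_vertices d" "v \<in> cube_vertices d"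
  shows "{u,v} \<in> cube_edges d \<longleftrightarrow> (\<exists>i<d. v = flip i u)"
proof -
  have g: "{u,v} \<in> cube_edges d \<longleftrightarrow> (\<exists>j. adj u v j)"
    using grid_edge_iff assms unfolding cube_edges_def cube_vertices_def by blast
  have "(\<exists>j. adj u v j) \<longleftrightarrow> (\<exists>i<d. v = flip i u)"
  proof
    assume "\<exists>j. adj u v j"
    then obtain j where a: "adj u v j" by blast
    have lu: "length u = d" "length v = d" using assms by (auto simp: cv_mem)
    have j: "j < d" using a lu by (simp add: adj_def)
    have "v = flip j u"
    proof (rule nth_equalityI)
      show "length v = length (flip j u)" using lu by (simp add: flip_def)
      fix i assume "i < length v"
      have uj: "u!j = 1 \<or> u!j = 2" "v!j = 1 \<or> v!j = 2" using assms j by (auto simp: cv_mem)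
      show "v ! i = flip j u ! i" using a uj \<open>i < length v\<close> lu
        by (cases "i = j") (auto simp: adj_def flip_def)
    qed
    then show "\<exists>i<d. v = flip i u" using j by blast
  next
    assume "\<exists>i<d. v = flip i u"
    then obtain i where i: "i < d" "v = flip i u" by blast
    have "adj u v i" using i assms by (auto simp: adj_def flip_def cv_mem)
    then show "\<exists>j. adj u v j" by blast
  qed
  then show ?thesis using g by simp
qed

lemma adj_len: "adj x y j \<Longrightarrow> length y = length x" by (simp add: adj_def)
lemma adj_lt: "adj x y j \<Longrightarrow> j < length x" by (simp add: adj_def)
lemma adj_other: "adj x y j \<Longrightarrow> i < length x \<Longrightarrow> i \<noteq> j \<Longrightarrow> y!i = x!i" by (simp add: adj_def)
lemma adj_dir: "adj x y j \<Longrightarrow> y!j = Suc (x!j) \<or> x!j = Suc (y!j)" by (simp add: adj_def)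
lemma adj_ne_j: "adj x y j \<Longrightarrow> y!j \<noteq> x!j" by (auto simp: adj_def)

lemma adj_same_dir_common:
  assumes xy: "adj x y j" and xz: "adj x z j" and "y \<noteq> z" and yw: "adj y w a" and zw: "adj z w b"
  shows "w = x"
proof -
  have L: "length y = length x" "length z = length x" "length w = length x" "j < length x"
    "a < length x" "b < length x"
    using adj_len[OF xy] adj_len[OF xz] adj_len[OF yw] adj_lt[OF xy] adj_lt[OF yw] adj_lt[OF zw] by auto
  have yz: "y!j \<noteq> z!j"
  proof
    assume e: "y!j = z!j"
    have "y = z"
    proof (rule nth_equalityI)
      show "length y = length z" using L by simp
      fix i assume "i < length y"
      then show "y!i = z!i" using e adj_other[OF xy, of i] adj_other[OF xz, of i] L by (cases "i = j") auto
    qed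
    then show False using assms by simp
  qed
  have aj: "a = j"
  proof (rule ccontr)
    assume na: "a \<noteq> j"
    have wj: "w!j = y!j" using adj_other[OF yw, of j] L na by auto
    have bj: "b = j" using adj_other[OF zw, of j] L wj yz by auto
    have "w!a = z!a" using adj_other[OF zw, of a] L na bj by auto
    moreover have "z!a = x!a" "y!a = x!a" using adj_other[OF xz, of a] adj_other[OF xy, of a] L na by auto
    ultimately show False using adj_ne_j[OF yw] by simp
  qed
  have bj: "b = j"
  proof (rule ccontr)
    assume nb: "b \<noteq> j"
    have "w!b = y!b" using adj_other[OF yw, of b] L nb aj by auto
    moreover have "z!b = x!b" "y!b = x!b" using adj_other[OF xz, of b] adj_other[OF xy, of b] L nb by auto
    ultimately show False using adj_ne_j[OF zw] by simp
  qed
  show ?thesis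
  proof (rule nth_equalityI)
    show "length w = length x" using L by simp
    fix i assume i: "i < length w"
    show "w!i = x!i"
    proof (cases "i = j")
      case False
      then show ?thesis using adj_other[OF yw, of i] adj_other[OF xy, of i] L i aj by auto
    next
      case True
      have "y!j = Suc (x!j) \<or> x!j = Suc (y!j)" "z!j = Suc (x!j) \<or> x!j = Suc (z!j)"
        "w!j = Suc (y!j) \<or> y!j = Suc (w!j)" "w!j = Suc (z!j) \<or> z!j = Suc (w!j)"
        using adj_dir[OF xy] adj_dir[OF xz] adj_dir[OF yw] adj_dir[OF zw] aj bj by auto
      then have "w!j = x!j" using yz by (elim disjE) linarith+
      then show ?thesis using True by simp
    qed
  qed
qed

lemma adj_diff_dir_common:
  assumes xy: "adj x y j" and xz: "adj x z k" and jk: "j \<noteq> k" and yw: "adj y w a" and zw: "adj z w b"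
    and "w \<noteq> x"
  shows "adj y w k \<and> adj z w j"
proof -
  have L: "length y = length x" "length z = length x" "length w = length x" "j < length x"
    "a < length x" "b < length x" "k < length x"
    using adj_len[OF xy] adj_len[OF xz] adj_len[OF yw] adj_lt[OF xy] adj_lt[OF yw] adj_lt[OF zw] adj_lt[OF xz]
    by auto
  have yzj: "y!j \<noteq> z!j" using adj_ne_j[OF xy] adj_other[OF xz, of j] L jk by auto
  have yzk: "y!k \<noteq> z!k" using adj_ne_j[OF xz] adj_other[OF xy, of k] L jk by auto
  have ab: "a = j \<or> b = j"
  proof (rule ccontr)
    assume "\<not> ?thesis"
    then have "w!j = y!j" "w!j = z!j" using adj_other[OF yw, of j] adj_other[OF zw, of j] L by auto
    then show False using yzj by simp
  qed
  have ab2: "a = k \<or> b = k"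
  proof (rule ccontr)
    assume "\<not> ?thesis"
    then have "w!k = y!k" "w!k = z!k" using adj_other[OF yw, of k] adj_other[OF zw, of k] L by auto
    then show False using yzk by simp
  qed
  have "a = k \<and> b = j"
  proof (rule ccontr)
    assume "\<not> ?thesis"
    then have aj: "a = j" "b = k" using ab ab2 jk by auto
    have "w = x"
    proof (rule nth_equalityI)
      show "length w = length x" using L by simp
      fix i assume i: "i < length w"
      show "w!i = x!i"
      proof -
        consider "i = j" | "i = k" | "i \<noteq> j \<and> i \<noteq> k" by blast
        then show ?thesis
        proof cases
          case 1 then show ?thesis using adj_other[OF zw, of i] adj_other[OF xz, of i] aj L jk by auto
        next
          case 2 then show ?thesis using adj_other[OF yw, of i] adj_other[OF xy, of i] aj L jk by auto
        next
          case 3 then show ?thesis using adj_other[OF yw, of i] adj_other[OF xy, of i] aj L i by auto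
        qed
      qed
    qed
    then show False using assms by simp
  qed
  then show ?thesis using yw zw by simp
qed

lemma cube_structure:
  assumes iso: "iso_subgraph (grid_vertices ns) (grid_edges ns) (cube_vertices d) (cube_edges d) V' E'"
    and len: "length ns = d"
  shows "\<exists>\<tau>. (\<forall>j<d. \<forall>x\<in>V'. \<tau> j x \<in> V' \<and> adj x (\<tau> j x) j \<and> \<tau> j (\<tau> j x) = x \<and> {x, \<tau> j x} \<in> E') \<and>
             (\<forall>x\<in>V'. \<forall>e\<in>E'. x \<in> e \<longrightarrow> (\<exists>j<d. e = {x, \<tau> j x})) \<and>
             (\<forall>j<d. \<forall>k<d. j \<noteq> k \<longrightarrow> (\<forall>x\<in>V'. \<tau> j (\<tau> k x) = \<tau> k (\<tau> j x))) \<and>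
             card V' = 2^d \<and> finite V' \<and> V' \<subseteq> grid_vertices ns"
proof -
  let ?CV = "cube_vertices d" and ?CE = "cube_edges d" and ?GV = "grid_vertices ns" and ?GE = "grid_edges ns"
  from iso obtain \<phi> where sub: "V' \<subseteq> ?GV" "E' \<subseteq> ?GE" "\<forall>e\<in>E'. e \<subseteq> V'"
    and bij: "bij_betw \<phi> ?CV V'" and iff: "\<forall>u\<in>?CV. \<forall>v\<in>?CV. {u,v} \<in> ?CE \<longleftrightarrow> {\<phi> u, \<phi> v} \<in> E'"
    unfolding iso_subgraph_def by blast
  have finCV: "finite ?CV" by (simp add: cube_vertices_def)
  have cardCV: "card ?CV = 2^d" by (simp add: cube_vertices_def gv_card prod_list_replicate)
  have finV: "finite V'" using bij finCV bij_betw_finite by blast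
  have cardV: "card V' = 2^d" using bij bij_betw_same_card cardCV by metis
  have injphi: "inj_on \<phi> ?CV" using bij bij_betw_def by blast
  define \<psi> where "\<psi> = inv_into ?CV \<phi>"
  have psi: "\<And>x. x \<in> V' \<Longrightarrow> \<psi> x \<in> ?CV \<and> \<phi> (\<psi> x) = x"
    unfolding \<psi>_def using bij by (metis bij_betw_def bij_betw_inv_into_right inv_into_into)
  have phiV: "\<And>u. u \<in> ?CV \<Longrightarrow> \<phi> u \<in> V'" using bij bij_betwE by blast
  have lenV: "\<And>x. x \<in> V' \<Longrightarrow> length x = d" using sub(1) gv_length len by blast
  define Y where "Y x i = \<phi> (flip i (\<psi> x))" for x i
  have EY: "\<And>x i. x \<in> V' \<Longrightarrow> i < d \<Longrightarrow> {x, Y x i} \<in> E'"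
  proof -
    fix x i assume x: "x \<in> V'" and i: "i < d"
    have "{\<psi> x, flip i (\<psi> x)} \<in> ?CE" using cube_adj psi[OF x] fl_mem i by blast
    then show "{x, Y x i} \<in> E'" using iff psi[OF x] fl_mem[of "\<psi> x" d i] i unfolding Y_def by metis
  qed
  have inV: "\<And>x y. {x,y} \<in> E' \<Longrightarrow> y \<in> V'" using sub(3) by blast
  have Ynb: "\<And>x y. x \<in> V' \<Longrightarrow> {x,y} \<in> E' \<Longrightarrow> \<exists>i<d. y = Y x i"
  proof -
    fix x y assume x: "x \<in> V'" and e: "{x,y} \<in> E'"
    have y: "y \<in> V'" using inV e by blast
    have "{\<phi> (\<psi> x), \<phi> (\<psi> y)} \<in> E'" using psi x y e by simp
    then have "{\<psi> x, \<psi> y} \<in> ?CE" using iff psi x y by blast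
    then obtain i where "i < d" "\<psi> y = flip i (\<psi> x)" using cube_adj psi x y by blast
    then show "\<exists>i<d. y = Y x i" unfolding Y_def using psi y by metis
  qed
  have adjE: "\<And>x y. x \<in> V' \<Longrightarrow> {x,y} \<in> E' \<Longrightarrow> \<exists>j. adj x y j"
    using grid_edge_iff sub inV by blast
  have Yinj: "\<And>x i i'. x \<in> V' \<Longrightarrow> i < d \<Longrightarrow> i' < d \<Longrightarrow> Y x i = Y x i' \<Longrightarrow> i = i'"
  proof -
    fix x i i' assume x: "x \<in> V'" and i: "i < d" "i' < d" and e: "Y x i = Y x i'"
    have "flip i (\<psi> x) = flip i' (\<psi> x)"
      using e injphi fl_mem psi[OF x] i unfolding Y_def inj_on_def by blast
    then show "i = i'" using fl_inj psi[OF x] i by blast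
  qed
  define W where "W x i i' = \<phi> (flip i (flip i' (\<psi> x)))" for x i i'
  have common: "\<And>x i i'. x \<in> V' \<Longrightarrow> i < d \<Longrightarrow> i' < d \<Longrightarrow> i \<noteq> i' \<Longrightarrow>
      {Y x i, W x i i'} \<in> E' \<and> {Y x i', W x i i'} \<in> E' \<and> W x i i' \<noteq> x"
  proof -
    fix x i i' assume x: "x \<in> V'" and i: "i < d" "i' < d" "i \<noteq> i'"
    let ?u = "\<psi> x"
    have u: "?u \<in> ?CV" using psi x by blast
    have m1: "flip i ?u \<in> ?CV" "flip i' ?u \<in> ?CV" "flip i (flip i' ?u) \<in> ?CV"
      using fl_mem u i by auto
    have c1: "{flip i ?u, flip i' (flip i ?u)} \<in> ?CE" using cube_adj m1 fl_mem i by blast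
    have c2: "{flip i' ?u, flip i (flip i' ?u)} \<in> ?CE" using cube_adj m1 fl_mem i by blast
    have e1: "{Y x i, W x i i'} \<in> E'"
      using iff m1 c1 fl_comm[OF i(3), of ?u] fl_mem i unfolding Y_def W_def by metis
    have e2: "{Y x i', W x i i'} \<in> E'"
      using iff m1 c2 unfolding Y_def W_def by blast
    have "flip i (flip i' ?u) \<noteq> ?u" using fl_ne2 u i by blast
    then have "W x i i' \<noteq> x" using injphi m1 u psi[OF x] unfolding W_def inj_on_def by metis
    then show "{Y x i, W x i i'} \<in> E' \<and> {Y x i', W x i i'} \<in> E' \<and> W x i i' \<noteq> x" using e1 e2 by blast
  qed
  define D where "D x i = (SOME j. adj x (Y x i) j)" for x i
  have adjY: "\<And>x i. x \<in> V' \<Longrightarrow> i < d \<Longrightarrow> adj x (Y x i) (D x i)"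
    unfolding D_def using adjE EY by (meson someI_ex)
  have Dlt: "\<And>x i. x \<in> V' \<Longrightarrow> i < d \<Longrightarrow> D x i < d"
    using adjY adj_lt lenV by metis
  have Dinj: "\<And>x i i'. x \<in> V' \<Longrightarrow> i < d \<Longrightarrow> i' < d \<Longrightarrow> D x i = D x i' \<Longrightarrow> i = i'"
  proof (rule ccontr)
    fix x i i' assume x: "x \<in> V'" and i: "i < d" "i' < d" and e: "D x i = D x i'" and ne: "i \<noteq> i'"
    have c: "{Y x i, W x i i'} \<in> E'" "{Y x i', W x i i'} \<in> E'" "W x i i' \<noteq> x" using common x i ne by auto
    have yv: "Y x i \<in> V'" "Y x i' \<in> V'" using EY inV x i by blast+
    obtain a where a: "adj (Y x i) (W x i i') a" using adjE c yv by blast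
    obtain b where b: "adj (Y x i') (W x i i') b" using adjE c yv by blast
    have "Y x i \<noteq> Y x i'" using Yinj x i ne by blast
    then have "W x i i' = x" using adj_same_dir_common[OF adjY[OF x i(1)] _ _ a b] adjY[OF x i(2)] e by metis
    then show False using c by simp
  qed
  have Dsurj: "\<And>x j. x \<in> V' \<Longrightarrow> j < d \<Longrightarrow> \<exists>i<d. D x i = j"
  proof -
    fix x j assume x: "x \<in> V'" and j: "j < d"
    have "inj_on (D x) {..<d}" using Dinj x by (auto simp: inj_on_def)
    then have "card (D x ` {..<d}) = d" by (simp add: card_image)
    moreover have "D x ` {..<d} \<subseteq> {..<d}" using Dlt x by auto
    ultimately have "D x ` {..<d} = {..<d}" by (simp add: card_subset_eq)
    then show "\<exists>i<d. D x i = j" using j by (metis imageE lessThan_iff)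
  qed
  have uniq: "\<And>x y y' j. x \<in> V' \<Longrightarrow> {x,y} \<in> E' \<Longrightarrow> {x,y'} \<in> E' \<Longrightarrow> adj x y j \<Longrightarrow> adj x y' j \<Longrightarrow> y = y'"
  proof -
    fix x y y' j assume x: "x \<in> V'" and e: "{x,y} \<in> E'" "{x,y'} \<in> E'" and a: "adj x y j" "adj x y' j"
    obtain i where i: "i < d" "y = Y x i" using Ynb x e by blast
    obtain i' where i': "i' < d" "y' = Y x i'" using Ynb x e by blast
    have "D x i = j" using adj_uniq adjY x i a by metis
    moreover have "D x i' = j" using adj_uniq adjY x i' a by metis
    ultimately have "i = i'" using Dinj x i i' by metis
    then show "y = y'" using i i' by simp
  qed
  define \<tau> where "\<tau> j x = (SOME y. {x,y} \<in> E' \<and> adj x y j)" for j x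
  have tspec: "\<And>x j. x \<in> V' \<Longrightarrow> j < d \<Longrightarrow> {x, \<tau> j x} \<in> E' \<and> adj x (\<tau> j x) j"
  proof -
    fix x j assume x: "x \<in> V'" and j: "j < d"
    obtain i where i: "i < d" "D x i = j" using Dsurj x j by blast
    have "{x, Y x i} \<in> E' \<and> adj x (Y x i) j" using EY adjY x i by metis
    then show "{x, \<tau> j x} \<in> E' \<and> adj x (\<tau> j x) j" unfolding \<tau>_def by (rule someI)
  qed
  have tV: "\<And>x j. x \<in> V' \<Longrightarrow> j < d \<Longrightarrow> \<tau> j x \<in> V'" using tspec inV by blast
  have tt: "\<And>x j. x \<in> V' \<Longrightarrow> j < d \<Longrightarrow> \<tau> j (\<tau> j x) = x"
  proof -
    fix x j assume x: "x \<in> V'" and j: "j < d"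
    let ?y = "\<tau> j x"
    have y: "?y \<in> V'" using tV x j by blast
    have "{?y, x} \<in> E'" "adj ?y x j" using tspec[OF x j] adj_sym by (auto simp: insert_commute)
    then show "\<tau> j ?y = x" using uniq[OF y] tspec[OF y j] by blast
  qed
  have cover: "\<forall>x\<in>V'. \<forall>e\<in>E'. x \<in> e \<longrightarrow> (\<exists>j<d. e = {x, \<tau> j x})"
  proof (intro ballI impI)
    fix x e assume x: "x \<in> V'" and e: "e \<in> E'" and xe: "x \<in> e"
    obtain a b where ab: "e = {a,b}" using e sub(2) grid_edge_elem by (metis subsetD)
    obtain y where ey: "e = {x,y}" using ab xe by auto
    obtain j where aj: "adj x y j" using adjE x e ey by blast
    have j: "j < d" using adj_lt aj lenV x by metis
    have "y = \<tau> j x" using uniq[OF x] e ey aj tspec[OF x j] by blast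
    then show "\<exists>j<d. e = {x, \<tau> j x}" using ey j by blast
  qed
  have comm: "\<forall>j<d. \<forall>k<d. j \<noteq> k \<longrightarrow> (\<forall>x\<in>V'. \<tau> j (\<tau> k x) = \<tau> k (\<tau> j x))"
  proof (intro allI impI ballI)
    fix j k x assume j: "j < d" and k: "k < d" and jk: "j \<noteq> k" and x: "x \<in> V'"
    let ?y = "\<tau> j x" and ?z = "\<tau> k x"
    obtain i where i: "i < d" "?y = Y x i" using Ynb x tspec[OF x j] by blast
    obtain i' where i': "i' < d" "?z = Y x i'" using Ynb x tspec[OF x k] by blast
    have ii: "i \<noteq> i'"
    proof
      assume "i = i'"
      then have "?y = ?z" using i i' by simp
      then show False using tspec[OF x j] tspec[OF x k] adj_uniq jk by metis
    qed
    let ?w = "W x i i'"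
    have c: "{?y, ?w} \<in> E'" "{?z, ?w} \<in> E'" "?w \<noteq> x" using common[OF x i(1) i'(1) ii] i i' by auto
    have yz: "?y \<in> V'" "?z \<in> V'" using tV x j k by auto
    obtain a where a: "adj ?y ?w a" using adjE c yz by blast
    obtain b where b: "adj ?z ?w b" using adjE c yz by blast
    have ad: "adj ?y ?w k" "adj ?z ?w j"
      using adj_diff_dir_common[OF _ _ jk a b c(3)] tspec[OF x j] tspec[OF x k] by blast+
    have "\<tau> k ?y = ?w" using uniq[OF yz(1)] c(1) ad(1) tspec[OF yz(1) k] by blast
    moreover have "\<tau> j ?z = ?w" using uniq[OF yz(2)] c(2) ad(2) tspec[OF yz(2) j] by blast
    ultimately show "\<tau> j (\<tau> k x) = \<tau> k (\<tau> j x)" by simp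
  qed
  show ?thesis
    apply (rule exI[of _ \<tau>])
    using tV tspec tt cover comm cardV finV sub(1) by blast
qed

fun Ed :: "bool \<Rightarrow> nat list \<Rightarrow> nat list \<Rightarrow> nat" where
  "Ed ori (n#ns) (x#xs) = (if ori then x - 1 else n - x) + n * Ed ori ns xs"
| "Ed ori _ _ = 0"

lemma divmod_uniq:
  fixes m :: nat
  assumes "s < m" "s' < m" "q * m + s = q' * m + s'"
  shows "q = q' \<and> s = s'"
proof -
  have "q = (q * m + s) div m" using assms(1) by simp
  also have "\<dots> = (q' * m + s') div m" using assms(3) by simp
  also have "\<dots> = q'" using assms(2) by simp
  finally have 1: "q = q'" .
  have "s = (q * m + s) mod m" using assms(1) by simp
  also have "\<dots> = (q' * m + s') mod m" using assms(3) by simp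
  also have "\<dots> = s'" using assms(2) by simp
  finally have 2: "s = s'" .
  show ?thesis using 1 2 by simp
qed

lemma gv_prod_pos: "xs \<in> grid_vertices ns \<Longrightarrow> prod_list ns > 0"
proof (induction ns arbitrary: xs)
  case Nil then show ?case by simp
next
  case (Cons n ns)
  then obtain x xs' where "xs = x#xs'" by (cases xs) auto
  with Cons show ?case by auto
qed

lemma Ed_lt: "xs \<in> grid_vertices ns \<Longrightarrow> Ed ori ns xs < prod_list ns"
proof (induction ns arbitrary: xs)
  case Nil then show ?case by simp
next
  case (Cons n ns)
  then obtain x xs' where xs: "xs = x#xs'" by (cases xs) auto
  with Cons have x: "1 \<le> x" "x \<le> n" and r: "xs' \<in> grid_vertices ns" by auto
  have E: "Ed ori ns xs' + 1 \<le> prod_list ns" using Cons.IH r by fastforce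
  have d: "(if ori then x - 1 else n - x) < n" using x by auto
  have "n * (Ed ori ns xs' + 1) \<le> n * prod_list ns" using E by (rule mult_le_mono2)
  then show ?case using xs d by (simp add: algebra_simps)
qed

lemma Ed_inj: "xs \<in> grid_vertices ns \<Longrightarrow> ys \<in> grid_vertices ns \<Longrightarrow> Ed ori ns xs = Ed ori ns ys \<Longrightarrow> xs = ys"
proof (induction ns arbitrary: xs ys)
  case Nil then show ?case by simp
next
  case (Cons n ns)
  then obtain x xs' where xs: "xs = x#xs'" by (cases xs) auto
  from Cons obtain y ys' where ys: "ys = y#ys'" by (cases ys) auto
  from Cons xs ys have x: "1 \<le> x" "x \<le> n" "1 \<le> y" "y \<le> n" and r: "xs' \<in> grid_vertices ns" "ys' \<in> grid_vertices ns" by auto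
  have d: "(if ori then x - 1 else n - x) < n" "(if ori then y - 1 else n - y) < n" using x by auto
  have "Ed ori ns xs' * n + (if ori then x - 1 else n - x) = Ed ori ns ys' * n + (if ori then y - 1 else n - y)"
    using Cons.prems xs ys by (simp add: algebra_simps)
  from divmod_uniq[OF d this] have "Ed ori ns xs' = Ed ori ns ys'" "(if ori then x - 1 else n - x) = (if ori then y - 1 else n - y)"
    by auto
  then have "xs' = ys'" "x = y" using Cons.IH r x by (auto split: if_splits)
  then show ?case using xs ys by simp
qed

lemma Ed_pair: "xs \<in> grid_vertices ns \<Longrightarrow> Ed True ns xs + Ed False ns xs = prod_list ns - 1"
proof (induction ns arbitrary: xs)
  case Nil then show ?case by simp
next
  case (Cons n ns)
  then obtain x xs' where xs: "xs = x#xs'" by (cases xs) auto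
  with Cons have x: "1 \<le> x" "x \<le> n" and r: "xs' \<in> grid_vertices ns" by auto
  have P: "prod_list ns \<ge> 1" using gv_prod_pos r by fastforce
  have IH: "Ed True ns xs' + Ed False ns xs' = prod_list ns - 1" using Cons.IH r by blast
  have "Ed True (n#ns) xs + Ed False (n#ns) xs = (x - 1) + (n - x) + n * (Ed True ns xs' + Ed False ns xs')"
    using xs by (simp add: algebra_simps)
  also have "\<dots> = (n - 1) + n * (prod_list ns - 1)" using IH x by simp
  also have "\<dots> = n * prod_list ns - 1" using P x by (simp add: algebra_simps diff_mult_distrib2)
  finally show ?case by simp
qed

lemma sep_lemma: assumes "even (n1::nat)" "g < n1 div 2" "g' < n1 div 2"
  "(if odd a then g else n1 - 1 - g) = (if odd a' then g' else n1 - 1 - g')"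
  shows "(odd a \<longleftrightarrow> odd a') \<and> g = g'"
  using assms by (auto split: if_splits elim!: evenE)

definition blk :: "nat \<Rightarrow> nat \<Rightarrow> bool" where "blk n0 n1 \<longleftrightarrow> even n0 \<and> even n1"

definition Fa :: "nat \<Rightarrow> nat \<Rightarrow> nat \<Rightarrow> nat \<Rightarrow> nat" where
  "Fa n0 n1 a b = (if blk n0 n1 then (if odd a then (b-1) div 2 else n1 - 1 - (b-1) div 2)
                    else n0 * (if even a then b - 1 else n1 - b))"
definition Fb :: "nat \<Rightarrow> nat \<Rightarrow> nat \<Rightarrow> nat \<Rightarrow> nat" where
  "Fb n0 n1 a b = (if blk n0 n1 then n1 * (if odd b then (a-1) div 2 else n0 - 1 - (a-1) div 2)
                    else (if even b then a - 1 else n0 - a))"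
definition ca :: "nat \<Rightarrow> nat \<Rightarrow> nat" where "ca n0 n1 = (if blk n0 n1 then n1 - 1 else n0 * (n1 - 1))"
definition cb :: "nat \<Rightarrow> nat \<Rightarrow> nat" where "cb n0 n1 = (if blk n0 n1 then n1 * (n0 - 1) else n0 - 1)"

lemma par_flip: "a' = Suc a \<or> a = Suc a' \<Longrightarrow> (odd a \<longleftrightarrow> even a')" by auto

lemma Fa_pair:
  assumes "a' = Suc a \<or> a = Suc a'" "1 \<le> b" "b \<le> n1"
  shows "Fa n0 n1 a b + Fa n0 n1 a' b = ca n0 n1"
proof -
  have g: "(b-1) div 2 \<le> n1 - 1" using assms by linarith
  show ?thesis
  proof (cases "blk n0 n1")
    case True
    then show ?thesis using par_flip[OF assms(1)] g unfolding Fa_def ca_def by auto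
  next
    case False
    have "n0 * (b - 1) + n0 * (n1 - b) = n0 * (n1 - 1)" using assms
      by (simp add: add_mult_distrib2[symmetric])
    then show ?thesis using par_flip[OF assms(1)] False unfolding Fa_def ca_def by (auto simp: algebra_simps)
  qed
qed

lemma Fb_pair:
  assumes "b' = Suc b \<or> b = Suc b'" "1 \<le> a" "a \<le> n0"
  shows "Fb n0 n1 a b + Fb n0 n1 a b' = cb n0 n1"
proof -
  have g: "(a-1) div 2 \<le> n0 - 1" using assms by linarith
  show ?thesis
  proof (cases "blk n0 n1")
    case True
    have "(a - 1) div 2 + (n0 - 1 - (a - 1) div 2) = n0 - 1" using g by arith
    then have "n1 * ((a - 1) div 2) + n1 * (n0 - 1 - (a - 1) div 2) = n1 * (n0 - 1)"
      by (metis add_mult_distrib2)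
    then show ?thesis using par_flip[OF assms(1)] True unfolding Fb_def cb_def by (auto simp: algebra_simps)
  next
    case False
    then show ?thesis using par_flip[OF assms(1)] assms unfolding Fb_def cb_def by auto
  qed
qed

lemma F2_lt_inj:
  assumes a: "1 \<le> a" "a \<le> n0" "1 \<le> a'" "a' \<le> n0" and b: "1 \<le> b" "b \<le> n1" "1 \<le> b'" "b' \<le> n1"
  shows "Fa n0 n1 a b + Fb n0 n1 a b < n0 * n1 \<and>
         (Fa n0 n1 a b + Fb n0 n1 a b = Fa n0 n1 a' b' + Fb n0 n1 a' b' \<longrightarrow> a = a' \<and> b = b')"
proof (cases "blk n0 n1")
  case True
  then have ev: "even n0" "even n1" by (auto simp: blk_def)
  define L where "L a b = (if odd a then (b-1) div 2 else n1 - 1 - (b-1) div 2)" for a b :: nat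
  define H where "H a b = (if odd b then (a-1) div 2 else n0 - 1 - (a-1) div 2)" for a b :: nat
  have F: "\<And>a b. Fa n0 n1 a b + Fb n0 n1 a b = H a b * n1 + L a b"
    using True unfolding Fa_def Fb_def L_def H_def by (simp add: algebra_simps)
  have Llt: "\<And>a b. 1 \<le> b \<Longrightarrow> b \<le> n1 \<Longrightarrow> L a b < n1" unfolding L_def by auto
  have Hlt: "\<And>a b. 1 \<le> a \<Longrightarrow> a \<le> n0 \<Longrightarrow> H a b < n0" unfolding H_def by auto
  have Lsmall: "\<And>b. 1 \<le> b \<Longrightarrow> b \<le> n1 \<Longrightarrow> (b - 1) div 2 < n1 div 2" using ev by (auto elim!: evenE)
  have Hsmall: "\<And>a. 1 \<le> a \<Longrightarrow> a \<le> n0 \<Longrightarrow> (a - 1) div 2 < n0 div 2" using ev by (auto elim!: evenE)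
  have lt: "H a b * n1 + L a b < n0 * n1"
  proof -
    have "H a b * n1 + L a b < H a b * n1 + n1" using Llt b by simp
    also have "\<dots> = (H a b + 1) * n1" by simp
    also have "\<dots> \<le> n0 * n1" using Hlt[OF a(1,2), of b] by (intro mult_right_mono) auto
    finally show ?thesis .
  qed
  have inj: "a = a' \<and> b = b'" if e: "H a b * n1 + L a b = H a' b' * n1 + L a' b'"
  proof -
    have eq: "H a b = H a' b'" "L a b = L a' b'" using divmod_uniq[OF Llt[OF b(1,2)] Llt[OF b(3,4)] e] by auto
    have pa: "odd a \<longleftrightarrow> odd a'" and gb: "(b-1) div 2 = (b'-1) div 2"
      using sep_lemma[OF ev(2) Lsmall[OF b(1,2)] Lsmall[OF b(3,4)]] eq(2) unfolding L_def by blast+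
    have pb: "odd b \<longleftrightarrow> odd b'" and ha: "(a-1) div 2 = (a'-1) div 2"
      using sep_lemma[OF ev(1) Hsmall[OF a(1,2)] Hsmall[OF a(3,4)]] eq(1) unfolding H_def by blast+
    have "a = a'" using pa ha a by presburger
    moreover have "b = b'" using pb gb b by presburger
    ultimately show ?thesis ..
  qed
  show ?thesis using lt inj F by metis
next
  case False
  then have od: "odd n0 \<or> odd n1" by (auto simp: blk_def)
  define r0 where "r0 a b = (if even b then a - 1 else n0 - a)" for a b :: nat
  define r1 where "r1 a b = (if even a then b - 1 else n1 - b)" for a b :: nat
  have F: "\<And>a b. Fa n0 n1 a b + Fb n0 n1 a b = r1 a b * n0 + r0 a b"
    using False unfolding Fa_def Fb_def r0_def r1_def by (simp add: algebra_simps)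
  have r0lt: "\<And>a b. 1 \<le> a \<Longrightarrow> a \<le> n0 \<Longrightarrow> r0 a b < n0" unfolding r0_def by auto
  have r1lt: "\<And>a b. 1 \<le> b \<Longrightarrow> b \<le> n1 \<Longrightarrow> r1 a b < n1" unfolding r1_def by auto
  have lt: "r1 a b * n0 + r0 a b < n0 * n1"
  proof -
    have "r1 a b * n0 + r0 a b < r1 a b * n0 + n0" using r0lt a by simp
    also have "\<dots> = (r1 a b + 1) * n0" by simp
    also have "\<dots> \<le> n1 * n0" using r1lt[OF b(1,2), of a] by (intro mult_right_mono) auto
    finally show ?thesis by (simp add: mult.commute)
  qed
  have inj: "a = a' \<and> b = b'" if e: "r1 a b * n0 + r0 a b = r1 a' b' * n0 + r0 a' b'"
  proof -
    have eq: "r1 a b = r1 a' b'" "r0 a b = r0 a' b'" using divmod_uniq[OF r0lt[OF a(1,2)] r0lt[OF a(3,4)] e] by auto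
    show ?thesis
    proof (cases "odd n0")
      case True
      have pa: "even a \<longleftrightarrow> even a'" using eq(2) True a unfolding r0_def by (auto split: if_splits) presburger+
      have "b = b'" using eq(1) pa b unfolding r1_def by (auto split: if_splits)
      moreover then have "a = a'" using eq(2) a unfolding r0_def by (auto split: if_splits)
      ultimately show ?thesis by simp
    next
      case False
      then have o1: "odd n1" using od by simp
      have pb: "even b \<longleftrightarrow> even b'" using eq(1) o1 b unfolding r1_def by (auto split: if_splits) presburger+
      have "a = a'" using eq(2) pb a unfolding r0_def by (auto split: if_splits)
      moreover then have "b = b'" using eq(1) b unfolding r1_def by (auto split: if_splits)
      ultimately show ?thesis by simp
    qed
  qed
  show ?thesis using lt inj F by metis
qed

definition VF :: "nat list \<Rightarrow> nat list \<Rightarrow> nat" where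
  "VF ns x = Fa (ns!0) (ns!1) (x!0) (x!1) + Fb (ns!0) (ns!1) (x!0) (x!1)
             + ns!0 * ns!1 * Ed (even (x!0)) (drop 2 ns) (drop 2 x)"

lemma gv_Cons2: "x \<in> grid_vertices (n0#n1#R) \<longleftrightarrow>
   (\<exists>a b r. x = a#b#r \<and> 1 \<le> a \<and> a \<le> n0 \<and> 1 \<le> b \<and> b \<le> n1 \<and> r \<in> grid_vertices R)"
proof
  assume "x \<in> grid_vertices (n0#n1#R)"
  then show "\<exists>a b r. x = a#b#r \<and> 1 \<le> a \<and> a \<le> n0 \<and> 1 \<le> b \<and> b \<le> n1 \<and> r \<in> grid_vertices R"
    by (cases x; cases "tl x") auto
qed auto

lemma VF_lt_inj:
  assumes x: "x \<in> grid_vertices (n0#n1#R)" and y: "y \<in> grid_vertices (n0#n1#R)"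
  shows "VF (n0#n1#R) x < prod_list (n0#n1#R) \<and> (VF (n0#n1#R) x = VF (n0#n1#R) y \<longrightarrow> x = y)"
proof -
  obtain a b r where xa: "x = a#b#r" "1 \<le> a" "a \<le> n0" "1 \<le> b" "b \<le> n1" "r \<in> grid_vertices R"
    using x gv_Cons2 by blast
  obtain a' b' r' where ya: "y = a'#b'#r'" "1 \<le> a'" "a' \<le> n0" "1 \<le> b'" "b' \<le> n1" "r' \<in> grid_vertices R"
    using y gv_Cons2 by blast
  have F: "Fa n0 n1 a b + Fb n0 n1 a b < n0 * n1 \<and>
         (Fa n0 n1 a b + Fb n0 n1 a b = Fa n0 n1 a' b' + Fb n0 n1 a' b' \<longrightarrow> a = a' \<and> b = b')"
    using F2_lt_inj xa ya by blast
  have F': "Fa n0 n1 a' b' + Fb n0 n1 a' b' < n0 * n1"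
    using F2_lt_inj xa ya by blast
  have V: "VF (n0#n1#R) x = Ed (even a) R r * (n0 * n1) + (Fa n0 n1 a b + Fb n0 n1 a b)"
    using xa by (simp add: VF_def algebra_simps)
  have V': "VF (n0#n1#R) y = Ed (even a') R r' * (n0 * n1) + (Fa n0 n1 a' b' + Fb n0 n1 a' b')"
    using ya by (simp add: VF_def algebra_simps)
  have El: "Ed (even a) R r < prod_list R" using Ed_lt xa by blast
  have lt: "VF (n0#n1#R) x < prod_list (n0#n1#R)"
  proof -
    have "VF (n0#n1#R) x < Ed (even a) R r * (n0 * n1) + n0 * n1" using V F by simp
    also have "\<dots> = (Ed (even a) R r + 1) * (n0 * n1)" by simp
    also have "\<dots> \<le> prod_list R * (n0 * n1)" using El by (intro mult_right_mono) auto
    finally show ?thesis by (simp add: algebra_simps)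
  qed
  have inj: "x = y" if e: "VF (n0#n1#R) x = VF (n0#n1#R) y"
  proof -
    have "Ed (even a) R r = Ed (even a') R r' \<and> Fa n0 n1 a b + Fb n0 n1 a b = Fa n0 n1 a' b' + Fb n0 n1 a' b'"
      using divmod_uniq[of _ "n0*n1" _ "Ed (even a) R r" "Ed (even a') R r'"] F F' e V V' by metis
    then have "a = a'" "b = b'" "Ed (even a) R r = Ed (even a) R r'" using F by auto
    then have "r = r'" using Ed_inj xa ya by blast
    then show ?thesis using xa ya \<open>a = a'\<close> \<open>b = b'\<close> by simp
  qed
  show ?thesis using lt inj by blast
qed

lemma bij_from_inj:
  assumes "finite A" "inj_on f A" "f ` A \<subseteq> {1..n}" "card A = n"
  shows "bij_betw f A {1..n}"
proof -
  have "card (f ` A) = n" using assms card_image by metis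
  then have "f ` A = {1..n}" using assms(3) by (simp add: card_subset_eq)
  then show ?thesis using assms(2) by (simp add: bij_betw_def)
qed

lemma vertex_bij:
  assumes "ns = n0#n1#R"
  shows "bij_betw (\<lambda>x. Suc (VF ns x)) (grid_vertices ns) {1..card (grid_vertices ns)}"
proof (rule bij_from_inj)
  show "finite (grid_vertices ns)" by simp
  show "inj_on (\<lambda>x. Suc (VF ns x)) (grid_vertices ns)" using VF_lt_inj assms by (auto simp: inj_on_def)
  show "(\<lambda>x. Suc (VF ns x)) ` grid_vertices ns \<subseteq> {1..card (grid_vertices ns)}"
    using VF_lt_inj assms by (auto simp: gv_card Suc_le_eq)
qed simp

definition Hh :: "nat \<Rightarrow> nat \<Rightarrow> nat \<Rightarrow> nat \<Rightarrow> nat" where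
  "Hh n0 n1 a b = (n0 - a - 1) * (2*n1 - 1) + ((n1 - 1) + (b - 1))"
definition Vv :: "nat \<Rightarrow> nat \<Rightarrow> nat \<Rightarrow> nat \<Rightarrow> nat" where
  "Vv n0 n1 a b = (a - 1) * (2*n1 - 1) + (n1 - 1 - b)"
definition KK :: "nat \<Rightarrow> nat \<Rightarrow> nat" where
  "KK n0 n1 = (n0 - 1) * (2*n1 - 1) + (n1 - 1)"
definition Pj :: "nat list \<Rightarrow> nat \<Rightarrow> nat" where
  "Pj ns j = prod_list (ns[j := ns!j - 1])"
definition Sj :: "nat list \<Rightarrow> nat \<Rightarrow> nat" where
  "Sj ns j = (\<Sum>i\<in>{2..<j}. Pj ns i)"
definition X2 :: "nat list \<Rightarrow> nat \<Rightarrow> nat list \<Rightarrow> nat" where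
  "X2 ns j l = (if j = 0 then Hh (ns!0) (ns!1) (l!0) (l!1) else Vv (ns!0) (ns!1) (l!0) (l!1))"
definition E2 :: "nat list \<Rightarrow> nat \<Rightarrow> nat list \<Rightarrow> nat" where
  "E2 ns j l = (if j = 0 then Ed (even (l!1)) (drop 2 ns) (drop 2 l) else Ed (even (l!0)) (drop 2 ns) (drop 2 l))"
definition lab :: "nat list \<Rightarrow> nat \<Rightarrow> nat list \<Rightarrow> nat" where
  "lab ns j l = (if j \<le> 1 then X2 ns j l + KK (ns!0) (ns!1) * E2 ns j l
     else KK (ns!0) (ns!1) * prod_list (drop 2 ns) + Sj ns j + VF (ns[j := ns!j - 1]) l)"
definition Sig :: "nat list \<Rightarrow> (nat \<times> nat list) set" where
  "Sig ns = (SIGMA j:{..<length ns}. grid_vertices (ns[j := ns!j - 1]))"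
definition TT :: "nat list \<Rightarrow> nat" where
  "TT ns = (\<Sum>j<length ns. Pj ns j)"

lemma Hh_props:
  assumes "1 \<le> a" "a \<le> n0 - 1" "1 \<le> b" "b \<le> n1"
  shows "(n1 - 1) + (b - 1) < 2*n1 - 1" "n1 - 1 \<le> (n1 - 1) + (b - 1)" "Hh n0 n1 a b < KK n0 n1"
proof -
  show "(n1 - 1) + (b - 1) < 2*n1 - 1" using assms by linarith
  show "n1 - 1 \<le> (n1 - 1) + (b - 1)" by simp
  have "Hh n0 n1 a b < (n0 - a - 1) * (2*n1 - 1) + (2*n1 - 1)" unfolding Hh_def using assms by linarith
  also have "\<dots> = (n0 - a) * (2*n1 - 1)" using assms by (cases "n0 - a") (auto simp: algebra_simps)
  also have "\<dots> \<le> (n0 - 1) * (2*n1 - 1)" using assms by (intro mult_right_mono) auto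
  also have "\<dots> \<le> KK n0 n1" unfolding KK_def by simp
  finally show "Hh n0 n1 a b < KK n0 n1" .
qed

lemma Vv_props:
  assumes "1 \<le> a" "a \<le> n0" "1 \<le> b" "b \<le> n1 - 1"
  shows "n1 - 1 - b < n1 - 1" "Vv n0 n1 a b < KK n0 n1"
proof -
  show "n1 - 1 - b < n1 - 1" using assms by linarith
  have "Vv n0 n1 a b < (a - 1) * (2*n1 - 1) + (n1 - 1)" unfolding Vv_def using assms by linarith
  also have "\<dots> \<le> KK n0 n1" unfolding KK_def using assms by (intro add_right_mono mult_right_mono) auto
  finally show "Vv n0 n1 a b < KK n0 n1" .
qed

lemma Sig_mem: "(j, l) \<in> Sig ns \<longleftrightarrow> j < length ns \<and> l \<in> grid_vertices ns \<and> l!j < ns!j"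
proof -
  have "l \<in> grid_vertices (ns[j := ns!j - 1]) \<longleftrightarrow> l \<in> grid_vertices ns \<and> l!j < ns!j" if j: "j < length ns"
  proof
    assume l: "l \<in> grid_vertices (ns[j := ns!j - 1])"
    have len: "length l = length ns" using l by (simp add: grid_vertices_def)
    have b: "\<And>i. i < length ns \<Longrightarrow> 1 \<le> l!i \<and> l!i \<le> ns[j := ns!j - 1]!i" using l by (simp add: grid_vertices_def)
    have "\<And>i. i < length ns \<Longrightarrow> 1 \<le> l!i \<and> l!i \<le> ns!i"
    proof -
      fix i assume i: "i < length ns"
      show "1 \<le> l!i \<and> l!i \<le> ns!i" using b[OF i] i by (cases "i = j") auto
    qed
    moreover have "l!j < ns!j" using b[OF j] j by auto
    ultimately show "l \<in> grid_vertices ns \<and> l!j < ns!j" using len by (simp add: grid_vertices_def)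
  next
    assume l: "l \<in> grid_vertices ns \<and> l!j < ns!j"
    have len: "length l = length ns" using l by (simp add: grid_vertices_def)
    have b: "\<And>i. i < length ns \<Longrightarrow> 1 \<le> l!i \<and> l!i \<le> ns!i" using l by (simp add: grid_vertices_def)
    have "\<And>i. i < length ns \<Longrightarrow> 1 \<le> l!i \<and> l!i \<le> ns[j := ns!j - 1]!i"
    proof -
      fix i assume i: "i < length ns"
      show "1 \<le> l!i \<and> l!i \<le> ns[j := ns!j - 1]!i" using b[OF i] i l by (cases "i = j") auto
    qed
    then show "l \<in> grid_vertices (ns[j := ns!j - 1])" using len by (simp add: grid_vertices_def)
  qed
  then show ?thesis unfolding Sig_def by auto
qed

lemma Sig_low0:
  assumes "ns = n0#n1#R" "(0,l) \<in> Sig ns"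
  shows "\<exists>a b r. l = a#b#r \<and> 1 \<le> a \<and> a \<le> n0 - 1 \<and> 1 \<le> b \<and> b \<le> n1 \<and> r \<in> grid_vertices R"
proof -
  have "l \<in> grid_vertices ns" "l!0 < ns!0" using assms Sig_mem by blast+
  then show ?thesis using assms gv_Cons2 by fastforce
qed

lemma Sig_low1:
  assumes "ns = n0#n1#R" "(1,l) \<in> Sig ns"
  shows "\<exists>a b r. l = a#b#r \<and> 1 \<le> a \<and> a \<le> n0 \<and> 1 \<le> b \<and> b \<le> n1 - 1 \<and> r \<in> grid_vertices R"
proof -
  have "l \<in> grid_vertices ns" "l!1 < ns!1" using assms Sig_mem by blast+
  then show ?thesis using assms gv_Cons2 by fastforce
qed

lemma low_bound:
  assumes ns: "ns = n0#n1#R" and jl: "(j,l) \<in> Sig ns" and j: "j \<le> 1"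
  shows "X2 ns j l < KK n0 n1 \<and> E2 ns j l < prod_list R"
proof (cases "j = 0")
  case True
  then obtain a b r where l: "l = a#b#r" "1 \<le> a" "a \<le> n0 - 1" "1 \<le> b" "b \<le> n1" "r \<in> grid_vertices R"
    using Sig_low0 ns jl by blast
  then show ?thesis using True ns Hh_props[OF l(2-5)] Ed_lt[OF l(6)] by (simp add: X2_def E2_def)
next
  case False
  then have j1: "j = 1" using j by simp
  then obtain a b r where l: "l = a#b#r" "1 \<le> a" "a \<le> n0" "1 \<le> b" "b \<le> n1 - 1" "r \<in> grid_vertices R"
    using Sig_low1 ns jl by blast
  then show ?thesis using j1 ns Vv_props[OF l(2-5)] Ed_lt[OF l(6)] by (simp add: X2_def E2_def)
qed


lemma low_inj:
  assumes ns: "ns = n0#n1#R" and n: "n0 \<ge> 2" "n1 \<ge> 2"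
    and jl: "(j,l) \<in> Sig ns" "j \<le> 1" and jl': "(j',l') \<in> Sig ns" "j' \<le> 1"
    and eX: "X2 ns j l = X2 ns j' l'" and eE: "E2 ns j l = E2 ns j' l'"
  shows "j = j' \<and> l = l'"
proof -
  have m: "2*n1 - 1 > 0" using n by simp
  show ?thesis
  proof (cases "j = 0")
    case True
    then obtain a b r where l: "l = a#b#r" "1 \<le> a" "a \<le> n0 - 1" "1 \<le> b" "b \<le> n1" "r \<in> grid_vertices R"
      using Sig_low0 ns jl by blast
    note hp = Hh_props[OF l(2-5)]
    show ?thesis
    proof (cases "j' = 0")
      case True
      then obtain a' b' r' where l': "l' = a'#b'#r'" "1 \<le> a'" "a' \<le> n0 - 1" "1 \<le> b'" "b' \<le> n1" "r' \<in> grid_vertices R"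
        using Sig_low0 ns jl' by blast
      note hp' = Hh_props[OF l'(2-5)]
      have "Hh n0 n1 a b = Hh n0 n1 a' b'" using eX \<open>j = 0\<close> True ns l l' by (simp add: X2_def)
      from divmod_uniq[OF hp(1) hp'(1) this[unfolded Hh_def]]
      have "n0 - a - 1 = n0 - a' - 1 \<and> (n1 - 1) + (b - 1) = (n1 - 1) + (b' - 1)" .
      then have ab: "a = a'" "b = b'" using l l' by auto
      then have "Ed (even b) R r = Ed (even b) R r'" using eE \<open>j = 0\<close> True ns l l' by (simp add: E2_def)
      then have "r = r'" using Ed_inj l l' by blast
      then show ?thesis using ab l l' True \<open>j = 0\<close> by simp
    next
      case False
      then have j1: "j' = 1" using jl' by simp
      then obtain a' b' r' where l': "l' = a'#b'#r'" "1 \<le> a'" "a' \<le> n0" "1 \<le> b'" "b' \<le> n1 - 1" "r' \<in> grid_vertices R"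
        using Sig_low1 ns jl' by blast
      note vp = Vv_props[OF l'(2-5)]
      have "n1 - 1 - b' < 2*n1 - 1" using vp by linarith
      moreover have "Hh n0 n1 a b = Vv n0 n1 a' b'" using eX \<open>j = 0\<close> j1 ns l l' by (simp add: X2_def)
      ultimately have "(n1 - 1) + (b - 1) = n1 - 1 - b'"
        using divmod_uniq[OF hp(1)] unfolding Hh_def Vv_def by blast
      then show ?thesis using vp hp by linarith
    qed
  next
    case False
    then have j1: "j = 1" using jl by simp
    then obtain a b r where l: "l = a#b#r" "1 \<le> a" "a \<le> n0" "1 \<le> b" "b \<le> n1 - 1" "r \<in> grid_vertices R"
      using Sig_low1 ns jl by blast
    note vp = Vv_props[OF l(2-5)]
    have vlt: "n1 - 1 - b < 2*n1 - 1" using vp by linarith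
    show ?thesis
    proof (cases "j' = 0")
      case True
      then obtain a' b' r' where l': "l' = a'#b'#r'" "1 \<le> a'" "a' \<le> n0 - 1" "1 \<le> b'" "b' \<le> n1" "r' \<in> grid_vertices R"
        using Sig_low0 ns jl' by blast
      note hp = Hh_props[OF l'(2-5)]
      have "Vv n0 n1 a b = Hh n0 n1 a' b'" using eX j1 True ns l l' by (simp add: X2_def)
      then have "n1 - 1 - b = (n1 - 1) + (b' - 1)"
        using divmod_uniq[OF vlt hp(1)] unfolding Hh_def Vv_def by blast
      then show ?thesis using vp hp by linarith
    next
      case False
      then have j1': "j' = 1" using jl' by simp
      then obtain a' b' r' where l': "l' = a'#b'#r'" "1 \<le> a'" "a' \<le> n0" "1 \<le> b'" "b' \<le> n1 - 1" "r' \<in> grid_vertices R"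
        using Sig_low1 ns jl' by blast
      note vp' = Vv_props[OF l'(2-5)]
      have vlt': "n1 - 1 - b' < 2*n1 - 1" using vp' by linarith
      have "Vv n0 n1 a b = Vv n0 n1 a' b'" using eX j1 j1' ns l l' by (simp add: X2_def)
      from divmod_uniq[OF vlt vlt' this[unfolded Vv_def]]
      have "a - 1 = a' - 1 \<and> n1 - 1 - b = n1 - 1 - b'" .
      then have ab: "a = a'" "b = b'" using l l' by auto
      then have "Ed (even a) R r = Ed (even a) R r'" using eE j1 j1' ns l l' by (simp add: E2_def)
      then have "r = r'" using Ed_inj l l' by blast
      then show ?thesis using ab l l' j1 j1' by simp
    qed
  qed
qed

lemma upd_high:
  assumes "ns = n0#n1#R" "2 \<le> j"
  shows "ns[j := ns!j - 1] = n0#n1#(R[j-2 := R!(j-2) - 1])"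
proof -
  obtain k where k: "j = Suc (Suc k)" using assms(2) by (metis add_2_eq_Suc le_Suc_ex)
  then show ?thesis using assms by simp
qed

lemma high_bound:
  assumes ns: "ns = n0#n1#R" and jl: "(j,l) \<in> Sig ns" and j: "2 \<le> j"
  shows "VF (ns[j := ns!j - 1]) l < Pj ns j"
proof -
  have l: "l \<in> grid_vertices (ns[j := ns!j - 1])" using jl by (simp add: Sig_def)
  then show ?thesis using VF_lt_inj[of l n0 n1 "R[j-2 := R!(j-2) - 1]" l] upd_high[OF ns j] by (simp add: Pj_def)
qed

lemma Sj_Suc: "2 \<le> j \<Longrightarrow> Sj ns (Suc j) = Sj ns j + Pj ns j"
  by (simp add: Sj_def)

lemma Sj_mono: "j \<le> j' \<Longrightarrow> Sj ns j \<le> Sj ns j'"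
  unfolding Sj_def by (rule sum_mono2) auto

lemma KK_eq: "n0 \<ge> 1 \<Longrightarrow> n1 \<ge> 1 \<Longrightarrow> KK n0 n1 = (n0 - 1) * n1 + n0 * (n1 - 1)"
  unfolding KK_def by (cases n0; cases n1) (simp_all add: algebra_simps)

lemma TT_split:
  assumes ns: "ns = n0#n1#R" and n: "n0 \<ge> 1" "n1 \<ge> 1"
  shows "TT ns = KK n0 n1 * prod_list R + Sj ns (length ns)"
proof -
  have "TT ns = (\<Sum>j\<in>{0..<2}. Pj ns j) + (\<Sum>j\<in>{2..<length ns}. Pj ns j)"
    unfolding TT_def atLeast0LessThan[symmetric] using ns by (subst sum.atLeastLessThan_concat) auto
  also have "(\<Sum>j\<in>{0..<2}. Pj ns j) = Pj ns 0 + Pj ns 1" by (simp add: numeral_2_eq_2)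
  also have "\<dots> = KK n0 n1 * prod_list R" using ns n by (simp add: Pj_def KK_eq algebra_simps)
  finally show ?thesis by (simp add: Sj_def)
qed

lemma lab_lt_inj:
  assumes ns: "ns = n0#n1#R" and n: "n0 \<ge> 2" "n1 \<ge> 2"
    and jl: "(j,l) \<in> Sig ns" and jl': "(j',l') \<in> Sig ns"
  shows "lab ns j l < TT ns \<and> (lab ns j l = lab ns j' l' \<longrightarrow> j = j' \<and> l = l')"
proof -
  let ?K = "KK n0 n1" and ?M = "prod_list R" and ?d = "length ns"
  have TT: "TT ns = ?K * ?M + Sj ns ?d" using TT_split ns n by simp
  have jd: "j < ?d" "j' < ?d" using jl jl' by (auto simp: Sig_def)
  have low: "lab ns i m < ?K * ?M" if im: "(i,m) \<in> Sig ns" "i \<le> 1" for i m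
  proof -
    have b: "X2 ns i m < ?K" "E2 ns i m < ?M" using low_bound[OF ns im] by auto
    have "lab ns i m = X2 ns i m + ?K * E2 ns i m" using im ns by (simp add: lab_def)
    also have "\<dots> < ?K + ?K * E2 ns i m" using b by simp
    also have "\<dots> = ?K * (E2 ns i m + 1)" by (simp add: algebra_simps)
    also have "\<dots> \<le> ?K * ?M" using b by (intro mult_left_mono) auto
    finally show ?thesis .
  qed
  have high: "?K * ?M + Sj ns i \<le> lab ns i m \<and> lab ns i m < ?K * ?M + Sj ns (Suc i)"
    if im: "(i,m) \<in> Sig ns" "2 \<le> i" for i m
  proof -
    have "lab ns i m = ?K * ?M + Sj ns i + VF (ns[i := ns!i - 1]) m" using im ns by (simp add: lab_def)
    then show ?thesis using high_bound[OF ns im] Sj_Suc[OF im(2), of ns] by simp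
  qed
  have lt: "lab ns j l < TT ns"
  proof (cases "j \<le> 1")
    case True then show ?thesis using low[OF jl] TT by simp
  next
    case False
    then have "lab ns j l < ?K * ?M + Sj ns (Suc j)" using high[OF jl] by simp
    also have "\<dots> \<le> TT ns" using Sj_mono[of "Suc j" ?d ns] jd TT by simp
    finally show ?thesis .
  qed
  have inj: "j = j' \<and> l = l'" if e: "lab ns j l = lab ns j' l'"
  proof (cases "j \<le> 1")
    case True
    show ?thesis
    proof (cases "j' \<le> 1")
      case True
      have b: "X2 ns j l < ?K" "X2 ns j' l' < ?K" using low_bound[OF ns jl \<open>j \<le> 1\<close>] low_bound[OF ns jl' True] by auto
      have "E2 ns j l * ?K + X2 ns j l = E2 ns j' l' * ?K + X2 ns j' l'"
        using e \<open>j \<le> 1\<close> True ns by (simp add: lab_def algebra_simps)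
      from divmod_uniq[OF b this] have "E2 ns j l = E2 ns j' l'" "X2 ns j l = X2 ns j' l'" by auto
      then show ?thesis using low_inj[OF ns n jl \<open>j \<le> 1\<close> jl' True] by blast
    next
      case False
      then show ?thesis using low[OF jl \<open>j \<le> 1\<close>] high[OF jl'] e by simp
    qed
  next
    case False
    then have j2: "2 \<le> j" by simp
    show ?thesis
    proof (cases "j' \<le> 1")
      case True
      then show ?thesis using low[OF jl' True] high[OF jl j2] e by simp
    next
      case False
      then have j2': "2 \<le> j'" by simp
      have jj: "j = j'"
      proof (rule ccontr)
        assume "j \<noteq> j'"
        then consider "j < j'" | "j' < j" by linarith
        then show False
        proof cases
          case 1
          then show False using high[OF jl j2] high[OF jl' j2'] Sj_mono[of "Suc j" j' ns] e by simp
        next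
          case 2
          then show False using high[OF jl j2] high[OF jl' j2'] Sj_mono[of "Suc j'" j ns] e by simp
        qed
      qed
      have "VF (ns[j := ns!j - 1]) l = VF (ns[j := ns!j - 1]) l'" using e jj j2 ns by (simp add: lab_def)
      moreover have "l \<in> grid_vertices (n0#n1#(R[j-2 := R!(j-2) - 1]))"
        "l' \<in> grid_vertices (n0#n1#(R[j-2 := R!(j-2) - 1]))"
        using jl jl' jj upd_high[OF ns j2] by (auto simp: Sig_def)
      ultimately have "l = l'" using VF_lt_inj upd_high[OF ns j2] by metis
      then show ?thesis using jj by simp
    qed
  qed
  show ?thesis using lt inj by blast
qed

lemma Sig_finite: "finite (Sig ns)" unfolding Sig_def by auto

lemma card_Sig: "card (Sig ns) = TT ns"
  unfolding Sig_def TT_def Pj_def by (simp add: gv_card)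

definition edge :: "nat \<Rightarrow> nat list \<Rightarrow> nat list set" where
  "edge j l = {l, l[j := Suc (l!j)]}"

lemma edge_adj: "j < length l \<Longrightarrow> adj l (l[j := Suc (l!j)]) j"
  by (auto simp: adj_def)

lemma edge_in:
  assumes "(j,l) \<in> Sig ns" shows "edge j l \<in> grid_edges ns"
proof -
  have a: "j < length ns" "l \<in> grid_vertices ns" "l!j < ns!j" using assms Sig_mem by blast+
  have len: "length l = length ns" using a gv_length by blast
  have "l[j := Suc (l!j)] \<in> grid_vertices ns"
    using a len unfolding grid_vertices_def by (auto simp: nth_list_update)
  then show ?thesis unfolding edge_def using grid_edge_iff a edge_adj len by metis
qed

lemma edge_surj:
  assumes "e \<in> grid_edges ns" shows "\<exists>p\<in>Sig ns. e = (\<lambda>(j,l). edge j l) p"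
proof -
  obtain x y where e: "e = {x,y}" "x \<in> grid_vertices ns" "y \<in> grid_vertices ns" using assms grid_edge_elem by blast
  then obtain j where a: "adj x y j" using grid_edge_iff assms by blast
  have len: "length x = length ns" "length y = length ns" using e gv_length by auto
  have j: "j < length ns" using a len adj_lt by metis
  show ?thesis
  proof (cases "y!j = Suc (x!j)")
    case True
    have y: "y = x[j := Suc (x!j)]"
      by (rule nth_equalityI) (use a True len j in \<open>auto simp: adj_def nth_list_update\<close>)
    have "x!j < ns!j" using True gv_bounds[OF e(3) j] by simp
    then have "(j,x) \<in> Sig ns" using Sig_mem e j by blast
    then show ?thesis using e y unfolding edge_def by auto
  next
    case False
    then have F: "x!j = Suc (y!j)" using adj_dir[OF a] by simp
    have x: "x = y[j := Suc (y!j)]"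
      by (rule nth_equalityI) (use a F len j in \<open>auto simp: adj_def nth_list_update\<close>)
    have "y!j < ns!j" using F gv_bounds[OF e(2) j] by simp
    then have "(j,y) \<in> Sig ns" using Sig_mem e j by blast
    then show ?thesis using e x unfolding edge_def by auto
  qed
qed

lemma edge_inj: "inj_on (\<lambda>(j,l). edge j l) (Sig ns)"
proof (rule inj_onI, clarify)
  fix j l k m assume jl: "(j,l) \<in> Sig ns" and km: "(k,m) \<in> Sig ns" and e: "edge j l = edge k m"
  have jn: "j < length l" "k < length m" "length l = length m"
    using jl km Sig_mem gv_length by (metis)+
  let ?l' = "l[j := Suc (l!j)]" and ?m' = "m[k := Suc (m!k)]"
  have "(l = m \<and> ?l' = ?m') \<or> (l = ?m' \<and> ?l' = m)" using e unfolding edge_def by (auto simp: doubleton_eq_iff)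
  then show "j = k \<and> l = m"
  proof
    assume 1: "l = m \<and> ?l' = ?m'"
    have "j = k"
    proof (rule ccontr)
      assume "j \<noteq> k"
      then have "?m' ! j = m ! j" by simp
      moreover have "?l' ! j = Suc (l!j)" using jn by simp
      moreover have "?l' ! j = ?m' ! j" using 1 by (metis (no_types))
      ultimately show False using 1 by simp
    qed
    then show ?thesis using 1 by simp
  next
    assume 2: "l = ?m' \<and> ?l' = m"
    have "l ! k = Suc (m ! k)" using 2 jn by simp
    moreover have "m ! k = ?l' ! k" using 2 by (metis (no_types))
    moreover have "?l' ! k \<ge> l ! k" using jn by (cases "j = k") (auto simp: nth_list_update)
    ultimately show ?thesis by simp
  qed
qed

lemma edge_bij: "bij_betw (\<lambda>(j,l). edge j l) (Sig ns) (grid_edges ns)"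
  unfolding bij_betw_def using edge_inj edge_in edge_surj by fastforce

definition elab :: "nat list \<Rightarrow> nat list set \<Rightarrow> nat" where
  "elab ns e = Suc (case the_inv_into (Sig ns) (\<lambda>(j,l). edge j l) e of (j,l) \<Rightarrow> lab ns j l)"

lemma elab_edge: "(j,l) \<in> Sig ns \<Longrightarrow> elab ns (edge j l) = Suc (lab ns j l)"
  unfolding elab_def using the_inv_into_f_f[OF edge_inj, of "(j,l)" ns] by simp

lemma elab_bij:
  assumes ns: "ns = n0#n1#R" and n: "n0 \<ge> 2" "n1 \<ge> 2"
  shows "bij_betw (elab ns) (grid_edges ns) {1..card (grid_edges ns)}"
proof -
  have cE: "card (grid_edges ns) = TT ns" using bij_betw_same_card[OF edge_bij] card_Sig by metis
  have b1: "bij_betw (the_inv_into (Sig ns) (\<lambda>(j,l). edge j l)) (grid_edges ns) (Sig ns)"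
    using bij_betw_the_inv_into[OF edge_bij] .
  have b2: "bij_betw (\<lambda>p. Suc (case p of (j,l) \<Rightarrow> lab ns j l)) (Sig ns) {1..TT ns}"
  proof (rule bij_from_inj)
    show "finite (Sig ns)" by (rule Sig_finite)
    show "inj_on (\<lambda>p. Suc (case p of (j,l) \<Rightarrow> lab ns j l)) (Sig ns)"
      using lab_lt_inj[OF ns n] by (auto simp: inj_on_def)
    show "(\<lambda>p. Suc (case p of (j,l) \<Rightarrow> lab ns j l)) ` Sig ns \<subseteq> {1..TT ns}"
      using lab_lt_inj[OF ns n] by (auto simp: Suc_le_eq)
    show "card (Sig ns) = TT ns" by (rule card_Sig)
  qed
  have "bij_betw ((\<lambda>p. Suc (case p of (j,l) \<Rightarrow> lab ns j l)) \<circ> the_inv_into (Sig ns) (\<lambda>(j,l). edge j l))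
          (grid_edges ns) {1..TT ns}"
    using bij_betw_trans[OF b1 b2] .
  moreover have "((\<lambda>p. Suc (case p of (j,l) \<Rightarrow> lab ns j l)) \<circ> the_inv_into (Sig ns) (\<lambda>(j,l). edge j l)) = elab ns"
    by (rule ext) (simp add: elab_def)
  ultimately show ?thesis using cE by simp
qed

lemma HV_sum:
  assumes "1 \<le> a" "a + 1 \<le> n0" "1 \<le> b" "b + 1 \<le> n1" "e0 \<le> 1" "e1 \<le> 1"
  shows "Hh n0 n1 a (b + e1) + Vv n0 n1 (a + e0) b = (n0 - 2) * (2*n1 - 1) + (2*n1 - 3) + (2*n1 - 1) * e0 + e1"
proof -
  obtain p where p: "n0 = a + 1 + p" using assms by (metis le_add_diff_inverse)
  obtain q where q: "n1 = b + 1 + q" using assms by (metis le_add_diff_inverse)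
  obtain a' where a': "a = Suc a'" using assms by (cases a) auto
  obtain b' where b': "b = Suc b'" using assms by (cases b) auto
  show ?thesis unfolding Hh_def Vv_def p q a' b' by (simp add: algebra_simps)
qed

lemma pair_sum:
  fixes T :: "'a \<Rightarrow> nat"
  assumes fin: "finite A" and tA: "\<And>x. x \<in> A \<Longrightarrow> t x \<in> A" and tt: "\<And>x. x \<in> A \<Longrightarrow> t (t x) = x"
    and c: "\<And>x. x \<in> A \<Longrightarrow> T x + T (t x) = c"
  shows "2 * (\<Sum>x\<in>A. T x) = c * card A"
proof -
  have bij: "bij_betw t A A"
    unfolding bij_betw_def
  proof
    show "inj_on t A" by (metis inj_onI tt)
    show "t ` A = A"
    proof
      show "t ` A \<subseteq> A" using tA by blast
      show "A \<subseteq> t ` A" using tA tt by (metis image_eqI subsetI)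
    qed
  qed
  have "(\<Sum>x\<in>A. T (t x)) = (\<Sum>x\<in>A. T x)" using sum.reindex_bij_betw[OF bij] .
  then have "2 * (\<Sum>x\<in>A. T x) = (\<Sum>x\<in>A. T x + T (t x))" by (simp add: sum.distrib)
  also have "\<dots> = (\<Sum>x\<in>A. c)" using c by (rule sum.cong[OF refl])
  finally show ?thesis by simp
qed

locale cc =
  fixes ns :: "nat list" and n0 n1 :: nat and R :: "nat list"
    and V :: "nat list set" and E :: "nat list set set" and \<tau> :: "nat \<Rightarrow> nat list \<Rightarrow> nat list"
  assumes shape: "ns = n0#n1#R" and n0: "n0 \<ge> 2" and n1: "n1 \<ge> 2"
    and tau: "\<And>j x. j < length ns \<Longrightarrow> x \<in> V \<Longrightarrow> \<tau> j x \<in> V \<and> adj x (\<tau> j x) j \<and> \<tau> j (\<tau> j x) = x \<and> {x, \<tau> j x} \<in> E"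
    and cover: "\<And>x e. x \<in> V \<Longrightarrow> e \<in> E \<Longrightarrow> x \<in> e \<Longrightarrow> \<exists>j<length ns. e = {x, \<tau> j x}"
    and comm: "\<And>j k x. j < length ns \<Longrightarrow> k < length ns \<Longrightarrow> j \<noteq> k \<Longrightarrow> x \<in> V \<Longrightarrow> \<tau> j (\<tau> k x) = \<tau> k (\<tau> j x)"
    and finV: "finite V" and VG: "V \<subseteq> grid_vertices ns" and EG: "E \<subseteq> grid_edges ns" and EV: "\<And>e. e \<in> E \<Longrightarrow> e \<subseteq> V"
begin

lemma d2: "2 \<le> length ns" using shape by simp

lemma tV: "j < length ns \<Longrightarrow> x \<in> V \<Longrightarrow> \<tau> j x \<in> V" using tau by blast
lemma tt: "j < length ns \<Longrightarrow> x \<in> V \<Longrightarrow> \<tau> j (\<tau> j x) = x" using tau by blast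
lemma tadj: "j < length ns \<Longrightarrow> x \<in> V \<Longrightarrow> adj x (\<tau> j x) j" using tau by blast

lemma xG: "x \<in> V \<Longrightarrow> x \<in> grid_vertices ns" using VG by blast
lemma xlen: "x \<in> V \<Longrightarrow> length x = length ns" using xG gv_length by blast

lemma t_other: "j < length ns \<Longrightarrow> x \<in> V \<Longrightarrow> i < length ns \<Longrightarrow> i \<noteq> j \<Longrightarrow> \<tau> j x ! i = x ! i"
  using adj_other tadj xlen by metis

lemma t_dir: "j < length ns \<Longrightarrow> x \<in> V \<Longrightarrow> \<tau> j x ! j = Suc (x ! j) \<or> x ! j = Suc (\<tau> j x ! j)"
  using adj_dir tadj by metis

lemma t_drop2: "j < 2 \<Longrightarrow> x \<in> V \<Longrightarrow> drop 2 (\<tau> j x) = drop 2 x"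
proof (rule nth_equalityI)
  assume j: "j < 2" and x: "x \<in> V"
  have jl: "j < length ns" using j d2 by simp
  have l: "length (\<tau> j x) = length x" using tadj[OF jl x] adj_len by blast
  then show "length (drop 2 (\<tau> j x)) = length (drop 2 x)" by simp
  fix i assume "i < length (drop 2 (\<tau> j x))"
  then have "2 + i < length ns" using l xlen[OF x] by simp
  then show "drop 2 (\<tau> j x) ! i = drop 2 x ! i" using t_other[OF jl x, of "2+i"] j l xlen[OF x]
    by (simp add: nth_drop)
qed

lemma vert_sum: "2 * (\<Sum>x\<in>V. Suc (VF ns x)) = card V * (2 + ca n0 n1 + cb n0 n1 + n0 * n1 * (prod_list R - 1))"
proof -
  have l0: "0 < length ns" and l1: "1 < length ns" using d2 by auto
  define T1 where "T1 x = Fa n0 n1 (x!0) (x!1)" for x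
  define T2 where "T2 x = Fb n0 n1 (x!0) (x!1)" for x
  define T3 where "T3 x = Ed (even (x!0)) R (drop 2 x)" for x
  have VFe: "\<And>x. Suc (VF ns x) = 1 + T1 x + T2 x + n0 * n1 * T3 x"
    unfolding VF_def T1_def T2_def T3_def using shape by simp
  have bnd: "\<And>x i. x \<in> V \<Longrightarrow> i < length ns \<Longrightarrow> 1 \<le> x!i \<and> x!i \<le> ns!i" using gv_bounds xG by blast
  have s1: "2 * (\<Sum>x\<in>V. T1 x) = ca n0 n1 * card V"
  proof (rule pair_sum[OF finV, where t = "\<tau> 0"])
    fix x assume x: "x \<in> V"
    show "\<tau> 0 x \<in> V" "\<tau> 0 (\<tau> 0 x) = x" using tV tt x l0 by auto
    have "\<tau> 0 x ! 1 = x ! 1" using t_other[OF l0 x l1] by simp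
    then show "T1 x + T1 (\<tau> 0 x) = ca n0 n1" unfolding T1_def
      using Fa_pair[of "\<tau> 0 x ! 0" "x!0" "x!1" n1 n0] t_dir[OF l0 x] bnd[OF x l1] shape by auto
  qed
  have s2: "2 * (\<Sum>x\<in>V. T2 x) = cb n0 n1 * card V"
  proof (rule pair_sum[OF finV, where t = "\<tau> 1"])
    fix x assume x: "x \<in> V"
    show "\<tau> 1 x \<in> V" "\<tau> 1 (\<tau> 1 x) = x" using tV tt x l1 by auto
    have "\<tau> 1 x ! 0 = x ! 0" using t_other[OF l1 x l0] by simp
    then show "T2 x + T2 (\<tau> 1 x) = cb n0 n1" unfolding T2_def
      using Fb_pair[of "\<tau> 1 x ! 1" "x!1" "x!0" n0 n1] t_dir[OF l1 x] bnd[OF x l0] shape by auto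
  qed
  have s3: "2 * (\<Sum>x\<in>V. T3 x) = (prod_list R - 1) * card V"
  proof (rule pair_sum[OF finV, where t = "\<tau> 0"])
    fix x assume x: "x \<in> V"
    show "\<tau> 0 x \<in> V" "\<tau> 0 (\<tau> 0 x) = x" using tV tt x l0 by auto
    have dr: "drop 2 (\<tau> 0 x) = drop 2 x" using t_drop2 x by simp
    have par: "even (\<tau> 0 x ! 0) \<longleftrightarrow> \<not> even (x!0)" using t_dir[OF l0 x] by auto
    have r: "drop 2 x \<in> grid_vertices R" using xG[OF x] shape gv_Cons2 by fastforce
    show "T3 x + T3 (\<tau> 0 x) = prod_list R - 1" unfolding T3_def dr
      using Ed_pair[OF r] par by (cases "even (x!0)") (auto simp: add.commute)
  qed
  have "(\<Sum>x\<in>V. Suc (VF ns x)) = (\<Sum>x\<in>V. 1 + T1 x + T2 x + n0 * n1 * T3 x)" unfolding VFe ..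
  also have "\<dots> = (\<Sum>x\<in>V. 1) + (\<Sum>x\<in>V. T1 x) + (\<Sum>x\<in>V. T2 x) + n0 * n1 * (\<Sum>x\<in>V. T3 x)"
    by (simp only: sum.distrib sum_distrib_left)
  finally have "2 * (\<Sum>x\<in>V. Suc (VF ns x)) = 2 * card V + 2 * (\<Sum>x\<in>V. T1 x) + 2 * (\<Sum>x\<in>V. T2 x) + n0 * n1 * (2 * (\<Sum>x\<in>V. T3 x))"
    by (simp add: algebra_simps)
  also have "\<dots> = card V * (2 + ca n0 n1 + cb n0 n1 + n0 * n1 * (prod_list R - 1))"
    using s1 s2 s3 by (simp add: algebra_simps)
  finally show ?thesis .
qed


definition low :: "nat \<Rightarrow> nat list \<Rightarrow> nat list" where
  "low j x = (if x!j \<le> \<tau> j x ! j then x else \<tau> j x)"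

lemma low_props:
  assumes j: "j < length ns" and x: "x \<in> V"
  shows "(j, low j x) \<in> Sig ns" "{x, \<tau> j x} = edge j (low j x)"
    "\<And>i. i < length ns \<Longrightarrow> i \<noteq> j \<Longrightarrow> low j x ! i = x ! i"
    "low j x ! j = min (x!j) (\<tau> j x ! j)" "length (low j x) = length ns"
proof -
  have a: "adj x (\<tau> j x) j" using tadj j x by blast
  have lx: "length x = length ns" "length (\<tau> j x) = length ns" using xlen x adj_len a by auto
  have tx: "\<tau> j x \<in> V" using tV j x by blast
  show "\<And>i. i < length ns \<Longrightarrow> i \<noteq> j \<Longrightarrow> low j x ! i = x ! i"
    using t_other[OF j x] unfolding low_def by auto
  show "low j x ! j = min (x!j) (\<tau> j x ! j)" unfolding low_def by auto
  show "length (low j x) = length ns" using lx unfolding low_def by auto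
  have "{x, \<tau> j x} = edge j (low j x) \<and> (j, low j x) \<in> Sig ns" 
  proof (cases "x!j \<le> \<tau> j x ! j")
    case True
    then have s: "\<tau> j x ! j = Suc (x!j)" using t_dir[OF j x] by auto
    have e: "\<tau> j x = x[j := Suc (x!j)]"
    proof (rule nth_equalityI)
      show "length (\<tau> j x) = length (x[j := Suc (x!j)])" using lx by simp
      fix i assume "i < length (\<tau> j x)"
      then show "\<tau> j x ! i = x[j := Suc (x!j)] ! i"
        using lx s t_other[OF j x, of i] by (cases "i = j") (simp_all add: nth_list_update)
    qed
    have "x!j < ns!j" using s gv_bounds[OF xG[OF tx] j] by simp
    then have "(j, x) \<in> Sig ns" using Sig_mem xG[OF x] j by blast
    then show ?thesis using True e unfolding low_def edge_def by simp
  next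
    case False
    then have s: "x ! j = Suc (\<tau> j x!j)" using t_dir[OF j x] by auto
    have e: "x = (\<tau> j x)[j := Suc (\<tau> j x!j)]"
    proof (rule nth_equalityI)
      show "length x = length ((\<tau> j x)[j := Suc (\<tau> j x!j)])" using lx by simp
      fix i assume "i < length x"
      then show "x ! i = (\<tau> j x)[j := Suc (\<tau> j x!j)] ! i"
        using lx s t_other[OF j x, of i] by (cases "i = j") (simp_all add: nth_list_update)
    qed
    have "\<tau> j x!j < ns!j" using s gv_bounds[OF xG[OF x] j] by simp
    then have "(j, \<tau> j x) \<in> Sig ns" using Sig_mem xG[OF tx] j by blast
    then show ?thesis using False e unfolding low_def edge_def by (simp add: insert_commute)
  qed
  then show "{x, \<tau> j x} = edge j (low j x)" "(j, low j x) \<in> Sig ns" by auto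
qed

lemma elab_pair: "j < length ns \<Longrightarrow> x \<in> V \<Longrightarrow> elab ns {x, \<tau> j x} = Suc (lab ns j (low j x))"
  using low_props elab_edge by metis

lemma finE: "finite E"
proof -
  have "finite (grid_edges ns)" using bij_betw_finite[OF edge_bij] Sig_finite by blast
  then show ?thesis using EG finite_subset by blast
qed

lemma card_e: "e \<in> E \<Longrightarrow> card e = 2"
proof -
  assume e: "e \<in> E"
  then obtain a b where ab: "e = {a,b}" "a \<in> grid_vertices ns" "b \<in> grid_vertices ns"
    using EG grid_edge_elem by blast
  then obtain j where "adj a b j" using grid_edge_iff e EG by blast
  then have "a \<noteq> b" using adj_neq by blast
  then show "card e = 2" using ab by simp
qed

lemma edge_sum_swap: "2 * (\<Sum>e\<in>E. elab ns e) = (\<Sum>x\<in>V. \<Sum>j<length ns. elab ns {x, \<tau> j x})"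
proof -
  have inner: "(\<Sum>j<length ns. elab ns {x, \<tau> j x}) = (\<Sum>e\<in>{e. e \<in> E \<and> x \<in> e}. elab ns e)" if x: "x \<in> V" for x
  proof -
    have bij: "bij_betw (\<lambda>j. {x, \<tau> j x}) {..<length ns} {e. e \<in> E \<and> x \<in> e}"
      unfolding bij_betw_def
    proof
      show "inj_on (\<lambda>j. {x, \<tau> j x}) {..<length ns}"
      proof (rule inj_onI)
        fix j k assume j: "j \<in> {..<length ns}" and k: "k \<in> {..<length ns}" and e: "{x, \<tau> j x} = {x, \<tau> k x}"
        have "\<tau> j x \<noteq> x" "\<tau> k x \<noteq> x" using tadj adj_neq x j k by (metis lessThan_iff)+
        then have "\<tau> j x = \<tau> k x" using e by (auto simp: doubleton_eq_iff)
        then show "j = k" using tadj[of j x] tadj[of k x] adj_uniq x j k by (metis lessThan_iff)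
      qed
      show "(\<lambda>j. {x, \<tau> j x}) ` {..<length ns} = {e. e \<in> E \<and> x \<in> e}"
        using tau x cover by fastforce
    qed
    show ?thesis using sum.reindex_bij_betw[OF bij] .
  qed
  have "(\<Sum>x\<in>V. \<Sum>j<length ns. elab ns {x, \<tau> j x}) = (\<Sum>x\<in>V. \<Sum>e\<in>{e. e \<in> E \<and> x \<in> e}. elab ns e)"
    using inner by (rule sum.cong[OF refl])
  also have "\<dots> = (\<Sum>e\<in>E. \<Sum>x\<in>{x. x \<in> V \<and> x \<in> e}. elab ns e)"
    using sum.swap_restrict[OF finV finE, of "\<lambda>x e. elab ns e" "\<lambda>x e. x \<in> e"] by simp
  also have "\<dots> = (\<Sum>e\<in>E. 2 * elab ns e)"
  proof (rule sum.cong[OF refl])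
    fix e assume e: "e \<in> E"
    have "{x. x \<in> V \<and> x \<in> e} = e" using EV e by blast
    then show "(\<Sum>x\<in>{x. x \<in> V \<and> x \<in> e}. elab ns e) = 2 * elab ns e" using card_e e by simp
  qed
  finally show ?thesis by (simp add: sum_distrib_left)
qed


lemma l01: "0 < length ns" "1 < length ns" using d2 by auto

lemma bndV: "x \<in> V \<Longrightarrow> i < length ns \<Longrightarrow> 1 \<le> x!i \<and> x!i \<le> ns!i" using gv_bounds xG by blast

lemma sumFa: "2 * (\<Sum>x\<in>V. Fa n0 n1 (x!0) (x!1)) = ca n0 n1 * card V"
proof (rule pair_sum[OF finV, where t = "\<tau> 0"])
  fix x assume x: "x \<in> V"
  show "\<tau> 0 x \<in> V" "\<tau> 0 (\<tau> 0 x) = x" using tV tt x l01 by auto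
  have "\<tau> 0 x ! 1 = x ! 1" using t_other[OF l01(1) x l01(2)] by simp
  then show "Fa n0 n1 (x!0) (x!1) + Fa n0 n1 (\<tau> 0 x ! 0) (\<tau> 0 x ! 1) = ca n0 n1"
    using Fa_pair[of "\<tau> 0 x ! 0" "x!0" "x!1" n1 n0] t_dir[OF l01(1) x] bndV[OF x l01(2)] shape by auto
qed

lemma sumFb: "2 * (\<Sum>x\<in>V. Fb n0 n1 (x!0) (x!1)) = cb n0 n1 * card V"
proof (rule pair_sum[OF finV, where t = "\<tau> 1"])
  fix x assume x: "x \<in> V"
  show "\<tau> 1 x \<in> V" "\<tau> 1 (\<tau> 1 x) = x" using tV tt x l01 by auto
  have "\<tau> 1 x ! 0 = x ! 0" using t_other[OF l01(2) x l01(1)] by simp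
  then show "Fb n0 n1 (x!0) (x!1) + Fb n0 n1 (\<tau> 1 x ! 0) (\<tau> 1 x ! 1) = cb n0 n1"
    using Fb_pair[of "\<tau> 1 x ! 1" "x!1" "x!0" n0 n1] t_dir[OF l01(2) x] bndV[OF x l01(1)] shape by auto
qed

lemma drop2R: "x \<in> V \<Longrightarrow> drop 2 x \<in> grid_vertices R"
  using xG shape gv_Cons2 by fastforce

lemma sumEd: "k < 2 \<Longrightarrow> 2 * (\<Sum>x\<in>V. Ed (even (x!k)) R (drop 2 x)) = (prod_list R - 1) * card V"
proof (rule pair_sum[OF finV, where t = "\<tau> k"])
  fix x assume k: "k < 2" and x: "x \<in> V"
  have kl: "k < length ns" using k d2 by simp
  show "\<tau> k x \<in> V" "\<tau> k (\<tau> k x) = x" using tV tt x kl by auto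
  have dr: "drop 2 (\<tau> k x) = drop 2 x" using t_drop2 x k by simp
  have par: "even (\<tau> k x ! k) \<longleftrightarrow> \<not> even (x!k)" using t_dir[OF kl x] by auto
  show "Ed (even (x!k)) R (drop 2 x) + Ed (even (\<tau> k x ! k)) R (drop 2 (\<tau> k x)) = prod_list R - 1"
    unfolding dr using Ed_pair[OF drop2R[OF x]] par by (cases "even (x!k)") (auto simp: add.commute)
qed

lemma low_drop2: "j < 2 \<Longrightarrow> x \<in> V \<Longrightarrow> drop 2 (low j x) = drop 2 x"
proof (rule nth_equalityI)
  assume j: "j < 2" and x: "x \<in> V"
  have jl: "j < length ns" using j d2 by simp
  have l: "length (low j x) = length x" using low_props(5)[OF jl x] xlen[OF x] by simp
  then show "length (drop 2 (low j x)) = length (drop 2 x)" by simp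
  fix i assume "i < length (drop 2 (low j x))"
  then have "2 + i < length ns" using l xlen[OF x] by simp
  then show "drop 2 (low j x) ! i = drop 2 x ! i" using low_props(3)[OF jl x, of "2+i"] j l xlen[OF x]
    by simp
qed

lemma sum01:
  "2 * (\<Sum>x\<in>V. elab ns {x, \<tau> 0 x} + elab ns {x, \<tau> 1 x}) =
     card V * (2 * (2 + ((n0 - 2) * (2*n1 - 1) + (2*n1 - 3))) + (2*n1 - 1) + 1 + 2 * KK n0 n1 * (prod_list R - 1))"
proof -
  let ?K = "KK n0 n1" and ?C = "(n0 - 2) * (2*n1 - 1) + (2*n1 - 3)"
  define e0 where "e0 x = x!0 - min (x!0) (\<tau> 0 x ! 0)" for x
  define e1 where "e1 x = x!1 - min (x!1) (\<tau> 1 x ! 1)" for x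
  define Ea where "Ea x = Ed (even (x!1)) R (drop 2 x)" for x
  define Eb where "Eb x = Ed (even (x!0)) R (drop 2 x)" for x
  have pt: "elab ns {x, \<tau> 0 x} + elab ns {x, \<tau> 1 x} = 2 + ?C + (2*n1 - 1) * e0 x + e1 x + ?K * Ea x + ?K * Eb x"
    if x: "x \<in> V" for x
  proof -
    let ?m0 = "min (x!0) (\<tau> 0 x ! 0)" and ?m1 = "min (x!1) (\<tau> 1 x ! 1)"
    have L0: "low 0 x ! 0 = ?m0" "low 0 x ! 1 = x ! 1" "drop 2 (low 0 x) = drop 2 x"
      using low_props(3,4)[OF l01(1) x] low_drop2[of 0 x] x l01 by auto
    have L1: "low 1 x ! 1 = ?m1" "low 1 x ! 0 = x ! 0" "drop 2 (low 1 x) = drop 2 x"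
      using low_props(3,4)[OF l01(2) x] low_drop2[of 1 x] x l01 by auto
    have lab0: "lab ns 0 (low 0 x) = Hh n0 n1 ?m0 (x!1) + ?K * Ea x"
      using L0 shape unfolding lab_def X2_def E2_def Ea_def by simp
    have lab1: "lab ns 1 (low 1 x) = Vv n0 n1 (x!0) ?m1 + ?K * Eb x"
      using L1 shape unfolding lab_def X2_def E2_def Eb_def by simp
    have tx: "\<tau> 0 x \<in> V" "\<tau> 1 x \<in> V" using tV l01 x by auto
    have b0: "1 \<le> x!0" "x!0 \<le> n0" "1 \<le> \<tau> 0 x!0" "\<tau> 0 x!0 \<le> n0"
      using bndV[OF x l01(1)] bndV[OF tx(1) l01(1)] shape by auto
    have b1: "1 \<le> x!1" "x!1 \<le> n1" "1 \<le> \<tau> 1 x!1" "\<tau> 1 x!1 \<le> n1"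
      using bndV[OF x l01(2)] bndV[OF tx(2) l01(2)] shape by auto
    have d0: "\<tau> 0 x ! 0 = Suc (x ! 0) \<or> x ! 0 = Suc (\<tau> 0 x ! 0)" using t_dir[OF l01(1) x] .
    have d1: "\<tau> 1 x ! 1 = Suc (x ! 1) \<or> x ! 1 = Suc (\<tau> 1 x ! 1)" using t_dir[OF l01(2) x] .
    have hv: "Hh n0 n1 ?m0 (?m1 + e1 x) + Vv n0 n1 (?m0 + e0 x) ?m1 = ?C + (2*n1 - 1) * e0 x + e1 x"
      by (rule HV_sum) (use b0 b1 d0 d1 in \<open>auto simp: e0_def e1_def\<close>)
    have x0: "?m0 + e0 x = x!0" and x1: "?m1 + e1 x = x!1" unfolding e0_def e1_def by auto
    show ?thesis using elab_pair[OF l01(1) x] elab_pair[OF l01(2) x] lab0 lab1 hv x0 x1 by simp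
  qed
  have s0: "2 * (\<Sum>x\<in>V. e0 x) = 1 * card V"
  proof (rule pair_sum[OF finV, where t = "\<tau> 0"])
    fix x assume x: "x \<in> V"
    show "\<tau> 0 x \<in> V" "\<tau> 0 (\<tau> 0 x) = x" using tV tt x l01 by auto
    show "e0 x + e0 (\<tau> 0 x) = 1" unfolding e0_def using tt[OF l01(1) x] t_dir[OF l01(1) x] by auto
  qed
  have s1: "2 * (\<Sum>x\<in>V. e1 x) = 1 * card V"
  proof (rule pair_sum[OF finV, where t = "\<tau> 1"])
    fix x assume x: "x \<in> V"
    show "\<tau> 1 x \<in> V" "\<tau> 1 (\<tau> 1 x) = x" using tV tt x l01 by auto
    show "e1 x + e1 (\<tau> 1 x) = 1" unfolding e1_def using tt[OF l01(2) x] t_dir[OF l01(2) x] by auto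
  qed
  have sa: "2 * (\<Sum>x\<in>V. Ea x) = (prod_list R - 1) * card V" unfolding Ea_def using sumEd[of 1] by simp
  have sb: "2 * (\<Sum>x\<in>V. Eb x) = (prod_list R - 1) * card V" unfolding Eb_def using sumEd[of 0] by simp
  have "(\<Sum>x\<in>V. elab ns {x, \<tau> 0 x} + elab ns {x, \<tau> 1 x}) =
        (\<Sum>x\<in>V. 2 + ?C + (2*n1 - 1) * e0 x + e1 x + ?K * Ea x + ?K * Eb x)"
    using pt by (rule sum.cong[OF refl])
  also have "\<dots> = (\<Sum>x\<in>V. 2 + ?C) + (2*n1 - 1) * (\<Sum>x\<in>V. e0 x) + (\<Sum>x\<in>V. e1 x) + ?K * (\<Sum>x\<in>V. Ea x) + ?K * (\<Sum>x\<in>V. Eb x)"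
    by (simp only: sum.distrib sum_distrib_left)
  finally have "2 * (\<Sum>x\<in>V. elab ns {x, \<tau> 0 x} + elab ns {x, \<tau> 1 x}) =
     2 * card V * (2 + ?C) + (2*n1 - 1) * (2 * (\<Sum>x\<in>V. e0 x)) + 2 * (\<Sum>x\<in>V. e1 x) + ?K * (2 * (\<Sum>x\<in>V. Ea x)) + ?K * (2 * (\<Sum>x\<in>V. Eb x))"
    by (simp add: algebra_simps)
  also have "\<dots> = card V * (2 * (2 + ?C) + (2*n1 - 1) + 1 + 2 * ?K * (prod_list R - 1))"
    unfolding s0 s1 sa sb by (simp add: algebra_simps)
  finally show ?thesis .
qed


lemma low_tau0_drop2:
  assumes j: "2 \<le> j" "j < length ns" and x: "x \<in> V"
  shows "drop 2 (low j (\<tau> 0 x)) = drop 2 (low j x)"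
proof (rule nth_equalityI)
  have tx: "\<tau> 0 x \<in> V" using tV l01 x by auto
  have l: "length (low j x) = length ns" "length (low j (\<tau> 0 x)) = length ns"
    using low_props(5)[OF j(2) x] low_props(5)[OF j(2) tx] by auto
  then show "length (drop 2 (low j (\<tau> 0 x))) = length (drop 2 (low j x))" by simp
  fix i assume "i < length (drop 2 (low j (\<tau> 0 x)))"
  then have i: "2 + i < length ns" using l by simp
  have "low j (\<tau> 0 x) ! (2 + i) = low j x ! (2 + i)"
  proof (cases "2 + i = j")
    case True
    have j0: "j \<noteq> 0" using j by simp
    have c: "\<tau> j (\<tau> 0 x) = \<tau> 0 (\<tau> j x)" using comm[OF j(2) l01(1) j0 x] .
    have tjx: "\<tau> j x \<in> V" using tV j x by simp
    have "\<tau> 0 (\<tau> j x) ! j = \<tau> j x ! j" using t_other[OF l01(1) tjx j(2) j0] .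
    moreover have "\<tau> 0 x ! j = x ! j" using t_other[OF l01(1) x j(2) j0] .
    ultimately show ?thesis using low_props(4)[OF j(2) x] low_props(4)[OF j(2) tx] c True by simp
  next
    case False
    have ne: "2 + i \<noteq> 0" by simp
    show ?thesis using low_props(3)[OF j(2) x i False] low_props(3)[OF j(2) tx i False]
      t_other[OF l01(1) x i ne] by simp
  qed
  then show "drop 2 (low j (\<tau> 0 x)) ! i = drop 2 (low j x) ! i" using l d2 by (simp add: nth_drop)
qed

lemma sumJ:
  assumes j: "2 \<le> j" "j < length ns"
  shows "2 * (\<Sum>x\<in>V. elab ns {x, \<tau> j x}) =
    card V * (2 * (1 + KK n0 n1 * prod_list R + Sj ns j) + ca n0 n1 + cb n0 n1
              + n0 * n1 * (prod_list (R[j-2 := R!(j-2) - 1]) - 1))"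
proof -
  let ?R' = "R[j-2 := R!(j-2) - 1]" and ?K = "KK n0 n1"
  have up: "ns[j := ns!j - 1] = n0#n1#?R'" using upd_high[OF shape j(1)] .
  define T where "T x = Ed (even (x!0)) ?R' (drop 2 (low j x))" for x
  have pt: "elab ns {x, \<tau> j x} = (1 + ?K * prod_list R + Sj ns j) + Fa n0 n1 (x!0) (x!1) + Fb n0 n1 (x!0) (x!1) + n0 * n1 * T x"
    if x: "x \<in> V" for x
  proof -
    have L: "low j x ! 0 = x ! 0" "low j x ! 1 = x ! 1" using low_props(3)[OF j(2) x] j l01 by auto
    have "lab ns j (low j x) = ?K * prod_list R + Sj ns j + VF (n0#n1#?R') (low j x)"
      using j shape up unfolding lab_def by simp
    then show ?thesis using elab_pair[OF j(2) x] L unfolding VF_def T_def by simp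
  qed
  have sT: "2 * (\<Sum>x\<in>V. T x) = (prod_list ?R' - 1) * card V"
  proof (rule pair_sum[OF finV, where t = "\<tau> 0"])
    fix x assume x: "x \<in> V"
    show "\<tau> 0 x \<in> V" "\<tau> 0 (\<tau> 0 x) = x" using tV tt x l01 by auto
    have dr: "drop 2 (low j (\<tau> 0 x)) = drop 2 (low j x)" using low_tau0_drop2 j x by blast
    have par: "even (\<tau> 0 x ! 0) \<longleftrightarrow> \<not> even (x!0)" using t_dir[OF l01(1) x] by auto
    have "low j x \<in> grid_vertices (n0#n1#?R')" using low_props(1)[OF j(2) x] up by (simp add: Sig_def)
    then have r: "drop 2 (low j x) \<in> grid_vertices ?R'" using gv_Cons2 by fastforce
    show "T x + T (\<tau> 0 x) = prod_list ?R' - 1"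
      unfolding T_def dr using Ed_pair[OF r] par by (cases "even (x!0)") (auto simp: add.commute)
  qed
  have "(\<Sum>x\<in>V. elab ns {x, \<tau> j x}) = (\<Sum>x\<in>V. (1 + ?K * prod_list R + Sj ns j) + Fa n0 n1 (x!0) (x!1) + Fb n0 n1 (x!0) (x!1) + n0 * n1 * T x)"
    using pt by (rule sum.cong[OF refl])
  also have "\<dots> = (\<Sum>x\<in>V. 1 + ?K * prod_list R + Sj ns j) + (\<Sum>x\<in>V. Fa n0 n1 (x!0) (x!1)) + (\<Sum>x\<in>V. Fb n0 n1 (x!0) (x!1)) + n0 * n1 * (\<Sum>x\<in>V. T x)"
    by (simp only: sum.distrib sum_distrib_left)
  finally have "2 * (\<Sum>x\<in>V. elab ns {x, \<tau> j x}) = 2 * card V * (1 + ?K * prod_list R + Sj ns j) + 2 * (\<Sum>x\<in>V. Fa n0 n1 (x!0) (x!1)) + 2 * (\<Sum>x\<in>V. Fb n0 n1 (x!0) (x!1)) + n0 * n1 * (2 * (\<Sum>x\<in>V. T x))"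
    by (simp add: algebra_simps)
  also have "\<dots> = card V * (2 * (1 + ?K * prod_list R + Sj ns j) + ca n0 n1 + cb n0 n1 + n0 * n1 * (prod_list ?R' - 1))"
    unfolding sumFa sumFb sT by (simp add: algebra_simps)
  finally show ?thesis .
qed

lemma edge_total:
  "4 * (\<Sum>e\<in>E. elab ns e) = card V * ((2 * (2 + ((n0 - 2) * (2*n1 - 1) + (2*n1 - 3))) + (2*n1 - 1) + 1 + 2 * KK n0 n1 * (prod_list R - 1))
     + (\<Sum>j\<in>{2..<length ns}. 2 * (1 + KK n0 n1 * prod_list R + Sj ns j) + ca n0 n1 + cb n0 n1
              + n0 * n1 * (prod_list (R[j-2 := R!(j-2) - 1]) - 1)))"
proof -
  let ?d = "length ns"
  have split: "(\<Sum>j<?d. f j) = f 0 + f 1 + (\<Sum>j\<in>{2..<?d}. f j)" for f :: "nat \<Rightarrow> nat"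
  proof -
    have "(\<Sum>j<?d. f j) = (\<Sum>j\<in>{0..<2}. f j) + (\<Sum>j\<in>{2..<?d}. f j)"
      unfolding atLeast0LessThan[symmetric] using d2 by (subst sum.atLeastLessThan_concat) auto
    then show ?thesis by (simp add: numeral_2_eq_2)
  qed
  have "4 * (\<Sum>e\<in>E. elab ns e) = 2 * (\<Sum>x\<in>V. \<Sum>j<?d. elab ns {x, \<tau> j x})"
    using edge_sum_swap by simp
  also have "\<dots> = 2 * (\<Sum>x\<in>V. (elab ns {x, \<tau> 0 x} + elab ns {x, \<tau> 1 x}) + (\<Sum>j\<in>{2..<?d}. elab ns {x, \<tau> j x}))"
    using split by simp
  also have "\<dots> = 2 * (\<Sum>x\<in>V. elab ns {x, \<tau> 0 x} + elab ns {x, \<tau> 1 x}) + (\<Sum>j\<in>{2..<?d}. 2 * (\<Sum>x\<in>V. elab ns {x, \<tau> j x}))"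
    by (simp add: sum.distrib sum_distrib_left sum.swap[of _ "{2..<?d}"])
  also have "(\<Sum>j\<in>{2..<?d}. 2 * (\<Sum>x\<in>V. elab ns {x, \<tau> j x})) =
     (\<Sum>j\<in>{2..<?d}. card V * (2 * (1 + KK n0 n1 * prod_list R + Sj ns j) + ca n0 n1 + cb n0 n1
              + n0 * n1 * (prod_list (R[j-2 := R!(j-2) - 1]) - 1)))"
    by (rule sum.cong[OF refl]) (use sumJ in auto)
  finally show ?thesis unfolding sum01 by (simp add: sum_distrib_left algebra_simps)
qed

end

lemma cc_from_iso:
  assumes iso: "iso_subgraph (grid_vertices ns) (grid_edges ns) (cube_vertices d) (cube_edges d) V' E'"
    and len: "length ns = d" and shape: "ns = n0#n1#R" and n: "n0 \<ge> 2" "n1 \<ge> 2"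
  shows "\<exists>\<tau>. cc ns n0 n1 R V' E' \<tau> \<and> card V' = 2^d"
proof -
  obtain \<tau> where t: "\<forall>j<d. \<forall>x\<in>V'. \<tau> j x \<in> V' \<and> adj x (\<tau> j x) j \<and> \<tau> j (\<tau> j x) = x \<and> {x, \<tau> j x} \<in> E'"
    "\<forall>x\<in>V'. \<forall>e\<in>E'. x \<in> e \<longrightarrow> (\<exists>j<d. e = {x, \<tau> j x})"
    "\<forall>j<d. \<forall>k<d. j \<noteq> k \<longrightarrow> (\<forall>x\<in>V'. \<tau> j (\<tau> k x) = \<tau> k (\<tau> j x))"
    "card V' = 2^d" "finite V'" "V' \<subseteq> grid_vertices ns"
    using cube_structure[OF iso len] by blast
  have sub: "E' \<subseteq> grid_edges ns" "\<forall>e\<in>E'. e \<subseteq> V'" using iso unfolding iso_subgraph_def by blast+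
  have "cc ns n0 n1 R V' E' \<tau>"
    by (unfold_locales) (use t sub shape n len in auto)
  then show ?thesis using t(4) by blast
qed


lemma div4: "4 * (s::nat) = X \<Longrightarrow> s = X div 4" by auto

theorem theorem1:
  fixes d :: nat and ns :: "nat list"
  assumes "d \<ge> 2" and "length ns = d"
    and "\<forall>i<d. ns ! i \<ge> 2"
    and "sorted_wrt (\<ge>) ns"
  shows "(\<exists>f. magic_vertex_labeling (grid_vertices ns) (grid_edges ns)
                 (cube_vertices d) (cube_edges d) f) \<and>
         (\<exists>g. magic_edge_labeling (grid_vertices ns) (grid_edges ns)
                 (cube_vertices d) (cube_edges d) g)"
proof -
  obtain n0 n1 R where shape: "ns = n0#n1#R"
    using assms(1,2) by (cases ns; cases "tl ns") auto
  have n: "n0 \<ge> 2" "n1 \<ge> 2" using assms(1,2) spec[OF assms(3), of 0] spec[OF assms(3), of 1] shape by auto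
  let ?VC = "2 + ca n0 n1 + cb n0 n1 + n0 * n1 * (prod_list R - 1)"
  let ?EC = "(2 * (2 + ((n0 - 2) * (2*n1 - 1) + (2*n1 - 3))) + (2*n1 - 1) + 1 + 2 * KK n0 n1 * (prod_list R - 1))
     + (\<Sum>j\<in>{2..<length ns}. 2 * (1 + KK n0 n1 * prod_list R + Sj ns j) + ca n0 n1 + cb n0 n1
              + n0 * n1 * (prod_list (R[j-2 := R!(j-2) - 1]) - 1))"
  have V: "magic_vertex_labeling (grid_vertices ns) (grid_edges ns) (cube_vertices d) (cube_edges d) (\<lambda>x. Suc (VF ns x))"
    unfolding magic_vertex_labeling_def
  proof
    show "bij_betw (\<lambda>x. Suc (VF ns x)) (grid_vertices ns) {1..card (grid_vertices ns)}"
      using vertex_bij[OF shape] .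
    show "\<exists>c. \<forall>V' E'. iso_subgraph (grid_vertices ns) (grid_edges ns) (cube_vertices d) (cube_edges d) V' E' \<longrightarrow>
              (\<Sum>v\<in>V'. Suc (VF ns v)) = c"
    proof (intro exI allI impI)
      fix V' E' assume iso: "iso_subgraph (grid_vertices ns) (grid_edges ns) (cube_vertices d) (cube_edges d) V' E'"
      obtain \<tau> where c: "cc ns n0 n1 R V' E' \<tau>" "card V' = 2^d" using cc_from_iso[OF iso assms(2) shape n] by blast
      have "2 * (\<Sum>v\<in>V'. Suc (VF ns v)) = 2^d * ?VC" using cc.vert_sum[OF c(1)] c(2) by simp
      then show "(\<Sum>v\<in>V'. Suc (VF ns v)) = 2^d * ?VC div 2" by simp
    qed
  qed
  have Ed: "magic_edge_labeling (grid_vertices ns) (grid_edges ns) (cube_vertices d) (cube_edges d) (elab ns)"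
    unfolding magic_edge_labeling_def
  proof
    show "bij_betw (elab ns) (grid_edges ns) {1..card (grid_edges ns)}"
      using elab_bij[OF shape n] .
    show "\<exists>c. \<forall>V' E'. iso_subgraph (grid_vertices ns) (grid_edges ns) (cube_vertices d) (cube_edges d) V' E' \<longrightarrow>
              (\<Sum>e\<in>E'. elab ns e) = c"
    proof (intro exI allI impI)
      fix V' E' assume iso: "iso_subgraph (grid_vertices ns) (grid_edges ns) (cube_vertices d) (cube_edges d) V' E'"
      obtain \<tau> where c: "cc ns n0 n1 R V' E' \<tau>" "card V' = 2^d" using cc_from_iso[OF iso assms(2) shape n] by blast
      have "4 * (\<Sum>e\<in>E'. elab ns e) = 2^d * ?EC" using cc.edge_total[OF c(1)] c(2) by simp
      then show "(\<Sum>e\<in>E'. elab ns e) = 2^d * ?EC div 4" by (rule div4)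
    qed
  qed
  show ?thesis using V Ed by blast
qed

end
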